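(* Let $d\ge2$, $H\le\Sigma_d$, and $x\in A^\omega$. For the action of $V_d(H)$ on $A^\omega$, the germ group $G_x$ is isomorphic to $H_x$ if $x$ is not eventually periodic, and is isomorphic to a semidirect product $H_x\rtimes\mathbb Z$ if $x$ is eventually periodic.
   Context: $A=\{a_1,\dots,a_d\}$; $A^*$, $A^\omega$ are the finite and infinite words, $A^\omega$ with ultrametric $d(x,y)=e^{1-n}$, $n$ the first index where $x,y$ differ; balls are the sets $wA^\omega$, $w\in A^*$. $\Sigma_d$ acts letterwise on $A^\omega$. $V_d(H)$ is the group of homeomorphisms $g$ of $A^\omega$ such that every point lies in a ball $w_1A^\omega$ on which $g$ has the form $w_1y\mapsto w_2\sigma(y)$ for some $w_2\in A^*$, $\sigma\in H$. For a group $\Gamma$ acting on a space and a point $x$, $\Gamma_x$ is the stabilizer of $x$, $N_x\trianglelefteq\Gamma_x$ the subgroup of elements that are the identity on some open neighborhood of $x$, and the *germ group* is $G_x=\Gamma_x/N_x$. For $a\in A$, $H_a=\{\sigma\in H:\sigma(a)=a\}$; for $x=x_1x_2\dots$, the *eventual isotropy group* is $H_x=\bigcap\{H_a: a=x_i\text{ for infinitely many }i\}$. $x$ is *eventually periodic* if $x=u\bar v$ with $u,v\in A^*$, $v$ non-empty, $\bar v=vvv\cdots$. *)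

theory Defs
  imports "HOL-Algebra.Algebra"
begin

text \<open>Alphabet A = {1..d}; infinite words are sequences nat => nat with values in {1..d};
finite words are lists over {1..d}.\<close>

definition inf_words :: "nat \<Rightarrow> (nat \<Rightarrow> nat) set" where
  "inf_words d = {x. \<forall>i. x i \<in> {1..d}}"

definition fin_words :: "nat \<Rightarrow> nat list set" where
  "fin_words d = {w. set w \<subseteq> {1..d}}"

definition conc :: "nat list \<Rightarrow> (nat \<Rightarrow> nat) \<Rightarrow> (nat \<Rightarrow> nat)" where
  "conc w y = (\<lambda>i. if i < length w then w ! i else y (i - length w))"

definition word_ball :: "nat \<Rightarrow> nat list \<Rightarrow> (nat \<Rightarrow> nat) set" where
  "word_ball d w = {z \<in> inf_words d. \<forall>i < length w. z i = w ! i}"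

definition per_word :: "nat list \<Rightarrow> (nat \<Rightarrow> nat)" where
  "per_word v = (\<lambda>i. v ! (i mod length v))"

definition eventually_periodic :: "nat \<Rightarrow> (nat \<Rightarrow> nat) \<Rightarrow> bool" where
  "eventually_periodic d x \<longleftrightarrow>
     (\<exists>u v. u \<in> fin_words d \<and> v \<in> fin_words d \<and> v \<noteq> [] \<and> x = conc u (per_word v))"

text \<open>Continuity on A^omega w.r.t. the ultrametric d(x,y) = e^(1-n):
 for every y and every radius (prefix length n) there is a radius (prefix length m).\<close>
definition cont_words :: "nat \<Rightarrow> ((nat \<Rightarrow> nat) \<Rightarrow> (nat \<Rightarrow> nat)) \<Rightarrow> bool" where
  "cont_words d g \<longleftrightarrow> (\<forall>y \<in> inf_words d. \<forall>n. \<exists>m. \<forall>z \<in> inf_words d.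
      (\<forall>i < m. z i = y i) \<longrightarrow> (\<forall>i < n. g z i = g y i))"

definition homeo_words :: "nat \<Rightarrow> ((nat \<Rightarrow> nat) \<Rightarrow> (nat \<Rightarrow> nat)) \<Rightarrow> bool" where
  "homeo_words d g \<longleftrightarrow> g \<in> Bij (inf_words d) \<and> cont_words d g
     \<and> cont_words d (inv_into (inf_words d) g)"

definition locally_prefix_replacing ::
  "nat \<Rightarrow> (nat \<Rightarrow> nat) set \<Rightarrow> ((nat \<Rightarrow> nat) \<Rightarrow> (nat \<Rightarrow> nat)) \<Rightarrow> bool" where
  "locally_prefix_replacing d H g \<longleftrightarrow>
     (\<forall>y \<in> inf_words d. \<exists>w1 w2 \<sigma>. w1 \<in> fin_words d \<and> w2 \<in> fin_words d \<and> \<sigma> \<in> H \<and>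
        y \<in> word_ball d w1 \<and>
        (\<forall>z \<in> word_ball d w1. g z = conc w2 (\<sigma> \<circ> (\<lambda>i. z (i + length w1)))))"

definition V_carrier :: "nat \<Rightarrow> (nat \<Rightarrow> nat) set \<Rightarrow> ((nat \<Rightarrow> nat) \<Rightarrow> (nat \<Rightarrow> nat)) set" where
  "V_carrier d H = {g. homeo_words d g \<and> locally_prefix_replacing d H g}"

definition V_group :: "nat \<Rightarrow> (nat \<Rightarrow> nat) set \<Rightarrow> ((nat \<Rightarrow> nat) \<Rightarrow> (nat \<Rightarrow> nat)) monoid" where
  "V_group d H = (BijGroup (inf_words d)) \<lparr> carrier := V_carrier d H \<rparr>"

definition stab_group :: "nat \<Rightarrow> (nat \<Rightarrow> nat) set \<Rightarrow> (nat \<Rightarrow> nat) \<Rightarrow>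
    ((nat \<Rightarrow> nat) \<Rightarrow> (nat \<Rightarrow> nat)) monoid" where
  "stab_group d H x = (V_group d H) \<lparr> carrier := {g \<in> V_carrier d H. g x = x} \<rparr>"

definition open_words :: "nat \<Rightarrow> (nat \<Rightarrow> nat) set \<Rightarrow> bool" where
  "open_words d U \<longleftrightarrow> U \<subseteq> inf_words d \<and>
     (\<forall>y \<in> U. \<exists>n. \<forall>z \<in> inf_words d. (\<forall>i < n. z i = y i) \<longrightarrow> z \<in> U)"

definition germ_trivial :: "nat \<Rightarrow> (nat \<Rightarrow> nat) set \<Rightarrow> (nat \<Rightarrow> nat) \<Rightarrow>
    ((nat \<Rightarrow> nat) \<Rightarrow> (nat \<Rightarrow> nat)) set" where
  "germ_trivial d H x = {g \<in> carrier (stab_group d H x).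
     \<exists>U. open_words d U \<and> x \<in> U \<and> (\<forall>y \<in> U. g y = y)}"

definition germ_group :: "nat \<Rightarrow> (nat \<Rightarrow> nat) set \<Rightarrow> (nat \<Rightarrow> nat) \<Rightarrow>
    ((nat \<Rightarrow> nat) \<Rightarrow> (nat \<Rightarrow> nat)) set monoid" where
  "germ_group d H x = stab_group d H x Mod germ_trivial d H x"

definition eventual_isotropy :: "nat \<Rightarrow> (nat \<Rightarrow> nat) set \<Rightarrow> (nat \<Rightarrow> nat) \<Rightarrow> (nat \<Rightarrow> nat) set" where
  "eventual_isotropy d H x = {\<sigma> \<in> H. \<forall>a. infinite {i. x i = a} \<longrightarrow> \<sigma> a = a}"

definition eventual_isotropy_group :: "nat \<Rightarrow> (nat \<Rightarrow> nat) set \<Rightarrow> (nat \<Rightarrow> nat) \<Rightarrow>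
    (nat \<Rightarrow> nat) monoid" where
  "eventual_isotropy_group d H x = (sym_group d) \<lparr> carrier := eventual_isotropy d H x \<rparr>"

definition semidirect_product :: "('a, 'c) monoid_scheme \<Rightarrow> ('b, 'e) monoid_scheme \<Rightarrow>
    ('b \<Rightarrow> 'a \<Rightarrow> 'a) \<Rightarrow> ('a \<times> 'b) monoid" where
  "semidirect_product N K \<phi> =
     \<lparr> carrier = carrier N \<times> carrier K,
       monoid.mult = (\<lambda>(a, k) (b, l). (a \<otimes>\<^bsub>N\<^esub> \<phi> k b, k \<otimes>\<^bsub>K\<^esub> l)),
       one = (\<one>\<^bsub>N\<^esub>, \<one>\<^bsub>K\<^esub>) \<rparr>"

end

theory Submission
  imports Defs
begin



definition sh :: "nat \<Rightarrow> (nat\<Rightarrow>nat) \<Rightarrow> (nat\<Rightarrow>nat)" where "sh n z = (\<lambda>i. z (i+n))"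
definition pre :: "nat \<Rightarrow> (nat\<Rightarrow>nat) \<Rightarrow> nat list" where "pre n z = map z [0..<n]"

definition LF :: "nat \<Rightarrow> ((nat \<Rightarrow> nat) \<Rightarrow> (nat \<Rightarrow> nat)) \<Rightarrow> nat list \<Rightarrow> nat list \<Rightarrow> (nat\<Rightarrow>nat) \<Rightarrow> bool" where
  "LF d g w1 w2 \<sigma> \<longleftrightarrow> w1 \<in> fin_words d \<and> w2 \<in> fin_words d \<and> \<sigma> permutes {1..d} \<and>
     (\<forall>z\<in>word_ball d w1. g z = conc w2 (\<sigma> \<circ> sh (length w1) z))"

lemma conc_W: "w \<in> fin_words d \<Longrightarrow> y \<in> inf_words d \<Longrightarrow> conc w y \<in> inf_words d"
  unfolding fin_words_def inf_words_def conc_def by (auto dest: nth_mem)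

lemma perm_in1[simp]: "\<sigma> permutes {Suc 0..d} \<Longrightarrow> Suc 0 \<le> a \<Longrightarrow> a \<le> d \<Longrightarrow> Suc 0 \<le> \<sigma> a"
  using permutes_in_image[of \<sigma> "{Suc 0..d}" a] by auto
lemma perm_in2[simp]: "\<sigma> permutes {Suc 0..d} \<Longrightarrow> Suc 0 \<le> a \<Longrightarrow> a \<le> d \<Longrightarrow> \<sigma> a \<le> d"
  using permutes_in_image[of \<sigma> "{Suc 0..d}" a] by auto

lemma comp_W: "\<sigma> permutes {1..d} \<Longrightarrow> y \<in> inf_words d \<Longrightarrow> \<sigma> \<circ> y \<in> inf_words d"
  unfolding inf_words_def by (auto simp: permutes_in_image)

lemma sh_W: "y \<in> inf_words d \<Longrightarrow> sh n y \<in> inf_words d"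
  unfolding inf_words_def sh_def by auto

lemma ball_W: "z \<in> word_ball d w \<Longrightarrow> z \<in> inf_words d"
  unfolding word_ball_def by auto

lemma ball_conc: "w \<in> fin_words d \<Longrightarrow> y \<in> inf_words d \<Longrightarrow> conc w y \<in> word_ball d w"
  unfolding word_ball_def using conc_W by (auto simp: conc_def)

lemma ball_decomp: "z \<in> word_ball d w \<Longrightarrow> conc w (sh (length w) z) = z"
  unfolding word_ball_def conc_def sh_def by auto

lemma sh_conc[simp]: "sh (length w) (conc w y) = y"
  unfolding conc_def sh_def by auto

lemma sh_sh[simp]: "sh a (sh b z) = sh (a+b) z"
  unfolding sh_def by (auto simp: add.assoc)

lemma sh_0[simp]: "sh 0 z = z"
  unfolding sh_def by auto

lemma conc_Nil[simp]: "conc [] y = y"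
  unfolding conc_def by auto

lemma conc_append: "conc (a@b) y = conc a (conc b y)"
  unfolding conc_def by (rule ext) (auto simp: nth_append)

lemma fin_append[simp]: "a@b \<in> fin_words d \<longleftrightarrow> a \<in> fin_words d \<and> b \<in> fin_words d"
  unfolding fin_words_def by auto

lemma fin_Nil[simp]: "[] \<in> fin_words d" unfolding fin_words_def by auto

lemma ball_append: "z \<in> word_ball d (a@b) \<longleftrightarrow> z \<in> word_ball d a \<and> sh (length a) z \<in> word_ball d b"
proof
  assume z: "z \<in> word_ball d (a@b)"
  hence zW: "z \<in> inf_words d" and e: "\<And>i. i < length a + length b \<Longrightarrow> z i = (a@b)!i"
    unfolding word_ball_def by auto
  have "\<forall>i<length a. z i = a ! i" using e by (auto simp: nth_append)
  moreover have "\<forall>i<length b. sh (length a) z i = b ! i"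
  proof (intro allI impI)
    fix i assume "i < length b"
    hence "z (length a + i) = (a@b)!(length a + i)" using e by auto
    thus "sh (length a) z i = b ! i" by (simp add: sh_def add.commute nth_append)
  qed
  ultimately show "z \<in> word_ball d a \<and> sh (length a) z \<in> word_ball d b"
    using zW sh_W unfolding word_ball_def by auto
next
  assume z: "z \<in> word_ball d a \<and> sh (length a) z \<in> word_ball d b"
  hence zW: "z \<in> inf_words d" and ea: "\<And>i. i < length a \<Longrightarrow> z i = a!i"
    and eb: "\<And>i. i < length b \<Longrightarrow> z (i + length a) = b!i"
    unfolding word_ball_def sh_def by auto
  have "\<forall>i<length (a@b). z i = (a@b)!i"
  proof (intro allI impI)
    fix i assume i: "i < length (a@b)"
    show "z i = (a@b)!i"
    proof (cases "i < length a")
      case True thus ?thesis using ea by (simp add: nth_append)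
    next
      case False
      hence "z i = z ((i - length a) + length a)" by simp
      also have "\<dots> = b!(i - length a)" using i False by (intro eb) auto
      finally show ?thesis using False by (simp add: nth_append)
    qed
  qed
  thus "z \<in> word_ball d (a@b)" using zW unfolding word_ball_def by auto
qed

lemma conc_ball_iff: "w \<in> fin_words d \<Longrightarrow> y \<in> inf_words d \<Longrightarrow>
   conc w y \<in> word_ball d (w@r) \<longleftrightarrow> y \<in> word_ball d r"
  by (simp add: ball_append ball_conc)

lemma pre_fin: "z \<in> inf_words d \<Longrightarrow> pre n z \<in> fin_words d"
  unfolding pre_def fin_words_def inf_words_def by auto

lemma pre_ball: "z \<in> inf_words d \<Longrightarrow> z \<in> word_ball d (pre n z)"
  unfolding pre_def word_ball_def by auto

lemma length_pre[simp]: "length (pre n z) = n" unfolding pre_def by auto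

lemma ball_pre: "z \<in> word_ball d w \<Longrightarrow> w = pre (length w) z"
  unfolding pre_def word_ball_def by (intro nth_equalityI) auto

lemma ball_iff_pre: "z \<in> word_ball d w \<longleftrightarrow> z \<in> inf_words d \<and> pre (length w) z = w"
proof
  assume "z \<in> word_ball d w" thus "z \<in> inf_words d \<and> pre (length w) z = w"
    using ball_pre ball_W by metis
next
  assume a: "z \<in> inf_words d \<and> pre (length w) z = w"
  have "\<forall>i<length w. z i = w ! i"
  proof (intro allI impI)
    fix i assume "i < length w"
    hence "pre (length w) z ! i = z i" unfolding pre_def by simp
    thus "z i = w ! i" using a by simp
  qed
  thus "z \<in> word_ball d w" using a unfolding word_ball_def by auto
qed

lemma pre_eq_ball: "z \<in> inf_words d \<Longrightarrow> z' \<in> word_ball d (pre n z) \<longleftrightarrow> z' \<in> inf_words d \<and> (\<forall>i<n. z' i = z i)"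
  unfolding pre_def word_ball_def by auto

lemma pre_take: "m \<le> n \<Longrightarrow> pre n z = pre m z @ drop m (pre n z)"
proof -
  assume "m \<le> n"
  hence "take m (pre n z) = pre m z" unfolding pre_def by (simp add: take_map)
  thus ?thesis by (metis append_take_drop_id)
qed

lemma LF_refine:
  assumes "LF d g w1 w2 \<sigma>" "r \<in> fin_words d"
  shows "LF d g (w1@r) (w2 @ map \<sigma> r) \<sigma>"
proof -
  have fm: "map \<sigma> r \<in> fin_words d" using assms unfolding LF_def fin_words_def
    by auto
  show ?thesis unfolding LF_def
  proof (intro conjI ballI)
    fix z assume z: "z \<in> word_ball d (w1@r)"
    hence z1: "z \<in> word_ball d w1" and zr: "sh (length w1) z \<in> word_ball d r" by (auto simp: ball_append)
    have "g z = conc w2 (\<sigma> \<circ> sh (length w1) z)" using assms z1 unfolding LF_def by auto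
    also have "sh (length w1) z = conc r (sh (length r) (sh (length w1) z))" using ball_decomp[OF zr] by simp
    also have "\<sigma> \<circ> conc r (sh (length r) (sh (length w1) z)) = conc (map \<sigma> r) (\<sigma> \<circ> sh (length (w1@r)) z)"
      by (rule ext) (simp add: conc_def sh_def add.commute add.left_commute)
    finally show "g z = conc (w2 @ map \<sigma> r) (\<sigma> \<circ> sh (length (w1 @ r)) z)" by (simp add: conc_append)
  qed (use assms fm in \<open>simp_all add: LF_def\<close>)
qed




lemma const_W: "k \<in> {1..d} \<Longrightarrow> (\<lambda>_. k) \<in> inf_words d"
  unfolding inf_words_def by auto

lemma conc_sigma_unique:
  assumes d: "d \<ge> 2" and s: "\<sigma> permutes {1..d}" and s': "\<sigma>' permutes {1..d}"
    and e: "\<forall>y\<in>inf_words d. conc a (\<sigma> \<circ> y) = conc b (\<sigma>' \<circ> y)"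
  shows "length a = length b \<and> \<sigma> = \<sigma>'"
proof -
  have c1: "(\<lambda>_. 1::nat) \<in> inf_words d" and c2: "(\<lambda>_. 2::nat) \<in> inf_words d" using d const_W by auto
  have i1: "inj \<sigma>" "inj \<sigma>'" using s s' permutes_inj by auto
  have ab: "\<not> length a < length b"
  proof
    assume lt: "length a < length b"
    have "\<And>y. y \<in> inf_words d \<Longrightarrow> \<sigma> (y 0) = b ! length a"
    proof -
      fix y assume "y \<in> inf_words d"
      hence "conc a (\<sigma> \<circ> y) (length a) = conc b (\<sigma>' \<circ> y) (length a)" using e by auto
      thus "\<sigma> (y 0) = b ! length a" using lt by (simp add: conc_def)
    qed
    from this[OF c1] this[OF c2] have "\<sigma> 1 = \<sigma> 2" by simp
    thus False using i1 by (simp add: inj_eq)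
  qed
  have ba: "\<not> length b < length a"
  proof
    assume lt: "length b < length a"
    have "\<And>y. y \<in> inf_words d \<Longrightarrow> \<sigma>' (y 0) = a ! length b"
    proof -
      fix y assume "y \<in> inf_words d"
      hence "conc a (\<sigma> \<circ> y) (length b) = conc b (\<sigma>' \<circ> y) (length b)" using e by auto
      thus "\<sigma>' (y 0) = a ! length b" using lt by (simp add: conc_def)
    qed
    from this[OF c1] this[OF c2] have "\<sigma>' 1 = \<sigma>' 2" by simp
    thus False using i1 by (simp add: inj_eq)
  qed
  hence len: "length a = length b" using ab by simp
  have "\<sigma> k = \<sigma>' k" for k
  proof (cases "k \<in> {1..d}")
    case True
    have "conc a (\<sigma> \<circ> (\<lambda>_. k)) (length a) = conc b (\<sigma>' \<circ> (\<lambda>_. k)) (length a)"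
      using e const_W[OF True] by auto
    thus ?thesis using len by (simp add: conc_def)
  next
    case False thus ?thesis using s s' by (simp add: permutes_not_in)
  qed
  thus ?thesis using len by auto
qed

lemma LF_unique:
  assumes d: "d \<ge> 2" and L1: "LF d g w1 w2 \<sigma>" and L2: "LF d g v1 v2 \<sigma>'"
    and y1: "y \<in> word_ball d w1" and y2: "y \<in> word_ball d v1"
  shows "int (length w1) - int (length w2) = int (length v1) - int (length v2) \<and> \<sigma> = \<sigma>'"
proof -
  define L where "L = length w1 + length v1"
  define w where "w = pre L y"
  have yW: "y \<in> inf_words d" using y1 ball_W by auto
  have wfin: "w \<in> fin_words d" using pre_fin[OF yW] w_def by auto
  have w1e: "w = w1 @ drop (length w1) w"
    using pre_take[of "length w1" L y] ball_pre[OF y1] unfolding w_def L_def by simp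
  have v1e: "w = v1 @ drop (length v1) w"
    using pre_take[of "length v1" L y] ball_pre[OF y2] unfolding w_def L_def by simp
  have dw1: "drop (length w1) w \<in> fin_words d" using wfin w1e by (metis fin_append)
  have dv1: "drop (length v1) w \<in> fin_words d" using wfin v1e by (metis fin_append)
  have A: "LF d g w (w2 @ map \<sigma> (drop (length w1) w)) \<sigma>"
    using LF_refine[OF L1 dw1] w1e by simp
  have B: "LF d g w (v2 @ map \<sigma>' (drop (length v1) w)) \<sigma>'"
    using LF_refine[OF L2 dv1] v1e by simp
  have "\<forall>t\<in>inf_words d. conc (w2 @ map \<sigma> (drop (length w1) w)) (\<sigma> \<circ> t)
      = conc (v2 @ map \<sigma>' (drop (length v1) w)) (\<sigma>' \<circ> t)"
  proof
    fix t assume t: "t \<in> inf_words d"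
    have z: "conc w t \<in> word_ball d w" using ball_conc[OF wfin t] .
    from A z have "g (conc w t) = conc (w2 @ map \<sigma> (drop (length w1) w)) (\<sigma> \<circ> t)"
      unfolding LF_def by simp
    moreover from B z have "g (conc w t) = conc (v2 @ map \<sigma>' (drop (length v1) w)) (\<sigma>' \<circ> t)"
      unfolding LF_def by simp
    ultimately show "conc (w2 @ map \<sigma> (drop (length w1) w)) (\<sigma> \<circ> t)
      = conc (v2 @ map \<sigma>' (drop (length v1) w)) (\<sigma>' \<circ> t)" by simp
  qed
  from conc_sigma_unique[OF d _ _ this] L1 L2
  have "length (w2 @ map \<sigma> (drop (length w1) w)) = length (v2 @ map \<sigma>' (drop (length v1) w))"
    and "\<sigma> = \<sigma>'" unfolding LF_def by auto
  moreover have "length w = L" unfolding w_def by simp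
  moreover have "length w1 \<le> L" "length v1 \<le> L" unfolding L_def by auto
  ultimately show ?thesis by auto
qed

lemma LF_cong: "(\<And>z. z \<in> inf_words d \<Longrightarrow> g z = g' z) \<Longrightarrow> LF d g w1 w2 \<sigma> = LF d g' w1 w2 \<sigma>"
  unfolding LF_def using ball_W by metis

lemma LF_img: "LF d g w1 w2 \<sigma> \<Longrightarrow> z \<in> word_ball d w1 \<Longrightarrow> g z \<in> word_ball d w2"
  unfolding LF_def by (metis ball_W ball_conc comp_W sh_W)

lemma LF_comp:
  assumes Lh: "LF d h w1 w2 \<tau>" and y1: "y \<in> word_ball d w1"
    and Lg: "LF d g v1 v2 \<sigma>" and y2: "h y \<in> word_ball d v1"
  shows "\<exists>w b. LF d (g \<circ> h) w b (\<sigma> \<circ> \<tau>) \<and> y \<in> word_ball d w \<and>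
     int (length w) - int (length b) = (int (length w1) - int (length w2)) + (int (length v1) - int (length v2))"
proof -
  define L where "L = length w1 + length v1"
  define w where "w = pre L y"
  have yW: "y \<in> inf_words d" using y1 ball_W by auto
  have wfin: "w \<in> fin_words d" using pre_fin[OF yW] w_def by auto
  have yw: "y \<in> word_ball d w" using pre_ball[OF yW] w_def by auto
  have w1e: "w = w1 @ drop (length w1) w"
    using pre_take[of "length w1" L y] ball_pre[OF y1] unfolding w_def L_def by simp
  have dw1: "drop (length w1) w \<in> fin_words d" using wfin w1e by (metis fin_append)
  define a where "a = w2 @ map \<tau> (drop (length w1) w)"
  have A: "LF d h w a \<tau>" using LF_refine[OF Lh dw1] w1e unfolding a_def by simp
  have lw: "length w = L" unfolding w_def by simp
  have la: "length a = length w2 + L - length w1" unfolding a_def using lw L_def by simp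
  have hya: "h y \<in> word_ball d a" using LF_img[OF A yw] .
  have afin: "a \<in> fin_words d" using A unfolding LF_def by auto
  have ae: "a = v1 @ drop (length v1) a"
  proof -
    have "length v1 \<le> length a" using la L_def by simp
    hence "pre (length a) (h y) = pre (length v1) (h y) @ drop (length v1) (pre (length a) (h y))"
      by (rule pre_take)
    thus ?thesis using ball_pre[OF hya] ball_pre[OF y2] by simp
  qed
  have da: "drop (length v1) a \<in> fin_words d" using afin ae by (metis fin_append)
  define b where "b = v2 @ map \<sigma> (drop (length v1) a)"
  have B: "LF d g a b \<sigma>" using LF_refine[OF Lg da] ae unfolding b_def by simp
  have lb: "length b = length v2 + length a - length v1" unfolding b_def using la L_def by simp
  have st: "(\<sigma> \<circ> \<tau>) permutes {1..d}" using Lh Lg unfolding LF_def by (simp add: permutes_compose)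
  have "LF d (g \<circ> h) w b (\<sigma> \<circ> \<tau>)"
    unfolding LF_def
  proof (intro conjI ballI)
    fix z assume z: "z \<in> word_ball d w"
    have hz: "h z = conc a (\<tau> \<circ> sh (length w) z)" using A z unfolding LF_def by auto
    have "h z \<in> word_ball d a" using LF_img[OF A z] .
    hence "g (h z) = conc b (\<sigma> \<circ> sh (length a) (h z))" using B unfolding LF_def by auto
    also have "sh (length a) (h z) = \<tau> \<circ> sh (length w) z" using hz by simp
    finally show "(g \<circ> h) z = conc b ((\<sigma> \<circ> \<tau>) \<circ> sh (length w) z)" by (simp add: comp_def)
  qed (use wfin B st in \<open>simp_all add: LF_def\<close>)
  moreover have "int (length w) - int (length b) = (int (length w1) - int (length w2)) + (int (length v1) - int (length v2))"
    using la lb lw L_def by simp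
  ultimately show ?thesis using yw by blast
qed

lemma LF_inv:
  assumes g: "bij_betw g (inf_words d) (inf_words d)" and L: "LF d g w1 w2 \<sigma>"
  shows "LF d (inv_into (inf_words d) g) w2 w1 (inv' \<sigma>)"
  unfolding LF_def
proof (intro conjI ballI)
  have s: "\<sigma> permutes {1..d}" using L unfolding LF_def by auto
  show si: "inv' \<sigma> permutes {1..d}" using permutes_inv[OF s] .
  fix z assume z: "z \<in> word_ball d w2"
  define u where "u = conc w1 (inv' \<sigma> \<circ> sh (length w2) z)"
  have zW: "z \<in> inf_words d" using z ball_W by auto
  have w1f: "w1 \<in> fin_words d" using L unfolding LF_def by auto
  have u: "u \<in> word_ball d w1" unfolding u_def by (rule ball_conc[OF w1f comp_W[OF si sh_W[OF zW]]])
  have "g u = conc w2 (\<sigma> \<circ> sh (length w1) u)" using L u unfolding LF_def by auto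
  also have "\<dots> = conc w2 (sh (length w2) z)" unfolding u_def
    by (simp add: comp_assoc[symmetric] permutes_inv_o(1)[OF s])
  also have "\<dots> = z" using ball_decomp[OF z] .
  finally have gu: "g u = z" .
  have "inv_into (inf_words d) g z = u"
    using inv_into_f_f[OF bij_betw_imp_inj_on[OF g] ball_W[OF u]] gu by simp
  thus "inv_into (inf_words d) g z = conc w1 (inv' \<sigma> \<circ> sh (length w2) z)" unfolding u_def .
qed (use L in \<open>simp_all add: LF_def\<close>)




definition LPR :: "nat \<Rightarrow> (nat \<Rightarrow> nat) set \<Rightarrow> ((nat \<Rightarrow> nat) \<Rightarrow> (nat \<Rightarrow> nat)) \<Rightarrow> bool" where
  "LPR d H g \<longleftrightarrow> (\<forall>y\<in>inf_words d. \<exists>w1 w2 \<sigma>. \<sigma> \<in> H \<and> y \<in> word_ball d w1 \<and> LF d g w1 w2 \<sigma>)"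

lemma H_perm: "subgroup H (sym_group d) \<Longrightarrow> \<sigma> \<in> H \<Longrightarrow> \<sigma> permutes {1..d}"
  using subgroup.subset sym_group_carrier by blast

lemma lpr_iff:
  assumes "subgroup H (sym_group d)"
  shows "locally_prefix_replacing d H g \<longleftrightarrow> LPR d H g"
proof -
  have e: "\<And>z n. (\<lambda>i. z (i + n)) = sh n z" unfolding sh_def by simp
  show ?thesis unfolding locally_prefix_replacing_def LPR_def LF_def e
    using H_perm[OF assms] by blast
qed

lemma LPR_cont: "LPR d H g \<Longrightarrow> cont_words d g"
  unfolding cont_words_def
proof (intro ballI allI)
  fix y n assume L: "LPR d H g" and y: "y \<in> inf_words d"
  then obtain w1 w2 \<sigma> where yb: "y \<in> word_ball d w1" and F: "LF d g w1 w2 \<sigma>"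
    unfolding LPR_def by blast
  show "\<exists>m. \<forall>z\<in>inf_words d. (\<forall>i<m. z i = y i) \<longrightarrow> (\<forall>i<n. g z i = g y i)"
  proof (intro exI ballI impI allI)
    fix z i assume z: "z \<in> inf_words d" and a: "\<forall>i<length w1 + n. z i = y i" and i: "i < n"
    have zb: "z \<in> word_ball d w1" using yb z a unfolding word_ball_def by auto
    have "g z = conc w2 (\<sigma> \<circ> sh (length w1) z)" "g y = conc w2 (\<sigma> \<circ> sh (length w1) y)"
      using F zb yb unfolding LF_def by auto
    moreover have "i - length w2 + length w1 < length w1 + n" using i by auto
    ultimately show "g z i = g y i" using a unfolding conc_def sh_def by auto
  qed
qed

lemma LPR_cong: "(\<And>z. z \<in> inf_words d \<Longrightarrow> g z = g' z) \<Longrightarrow> LPR d H g = LPR d H g'"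
  unfolding LPR_def using LF_cong by metis

lemma inv_sym_H: "subgroup H (sym_group d) \<Longrightarrow> \<sigma> \<in> H \<Longrightarrow> inv' \<sigma> \<in> H"
  using subgroup.m_inv_closed[of H "sym_group d" \<sigma>] sym_group_inv_equality[of \<sigma> d]
    subgroup.subset by (metis subsetD)

lemma LPR_inv:
  assumes sg: "subgroup H (sym_group d)" and g: "bij_betw g (inf_words d) (inf_words d)" and L: "LPR d H g"
  shows "LPR d H (inv_into (inf_words d) g)"
  unfolding LPR_def
proof
  fix y assume y: "y \<in> inf_words d"
  define z where "z = inv_into (inf_words d) g y"
  have z: "z \<in> inf_words d" "g z = y" unfolding z_def using g y
    by (auto simp: bij_betw_def inv_into_into f_inv_into_f)
  obtain w1 w2 \<sigma> where s: "\<sigma> \<in> H" and zb: "z \<in> word_ball d w1" and F: "LF d g w1 w2 \<sigma>"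
    using L z unfolding LPR_def by blast
  have "y \<in> word_ball d w2" using LF_img[OF F zb] z by simp
  thus "\<exists>w1 w2 \<sigma>. \<sigma> \<in> H \<and> y \<in> word_ball d w1 \<and> LF d (inv_into (inf_words d) g) w1 w2 \<sigma>"
    using LF_inv[OF g F] inv_sym_H[OF sg s] by blast
qed

lemma V_iff:
  assumes sg: "subgroup H (sym_group d)"
  shows "g \<in> V_carrier d H \<longleftrightarrow> g \<in> Bij (inf_words d) \<and> LPR d H g"
proof
  assume "g \<in> V_carrier d H" thus "g \<in> Bij (inf_words d) \<and> LPR d H g"
    unfolding V_carrier_def homeo_words_def using lpr_iff[OF sg] by auto
next
  assume a: "g \<in> Bij (inf_words d) \<and> LPR d H g"
  hence b: "bij_betw g (inf_words d) (inf_words d)" unfolding Bij_def by auto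
  show "g \<in> V_carrier d H" unfolding V_carrier_def homeo_words_def
    using a LPR_cont LPR_inv[OF sg b] lpr_iff[OF sg] by auto
qed

lemma V_subgroup:
  assumes sg: "subgroup H (sym_group d)"
  shows "subgroup (V_carrier d H) (BijGroup (inf_words d))"
proof
  show "V_carrier d H \<subseteq> carrier (BijGroup (inf_words d))"
    using V_iff[OF sg] by (auto simp: BijGroup_def)
next
  fix g h assume g: "g \<in> V_carrier d H" and h: "h \<in> V_carrier d H"
  hence gB: "g \<in> Bij (inf_words d)" and hB: "h \<in> Bij (inf_words d)" and Lg: "LPR d H g" and Lh: "LPR d H h"
    using V_iff[OF sg] by auto
  have m: "g \<otimes>\<^bsub>BijGroup (inf_words d)\<^esub> h = compose (inf_words d) g h"
    using gB hB by (simp add: BijGroup_def)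
  have "LPR d H (g \<circ> h)" unfolding LPR_def
  proof
    fix y assume y: "y \<in> inf_words d"
    obtain w1 w2 \<tau> where t: "\<tau> \<in> H" and yb: "y \<in> word_ball d w1" and F: "LF d h w1 w2 \<tau>"
      using Lh y unfolding LPR_def by blast
    have hy: "h y \<in> inf_words d" using LF_img[OF F yb] ball_W by auto
    obtain v1 v2 \<sigma> where s: "\<sigma> \<in> H" and hyb: "h y \<in> word_ball d v1" and G: "LF d g v1 v2 \<sigma>"
      using Lg hy unfolding LPR_def by blast
    obtain w b where "LF d (g \<circ> h) w b (\<sigma> \<circ> \<tau>)" "y \<in> word_ball d w"
      using LF_comp[of d h w1 w2 \<tau> y g v1 v2 \<sigma>, OF F yb G hyb] by (elim exE conjE) (rule that)
    moreover have "\<sigma> \<circ> \<tau> \<in> H" using subgroup.m_closed[OF sg s t] by (simp add: sym_group_mult)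
    ultimately show "\<exists>w1 w2 \<sigma>. \<sigma> \<in> H \<and> y \<in> word_ball d w1 \<and> LF d (g \<circ> h) w1 w2 \<sigma>" by blast
  qed
  hence "LPR d H (compose (inf_words d) g h)"
    using LPR_cong[of d "compose (inf_words d) g h" "g \<circ> h" H] by (simp add: compose_def)
  thus "g \<otimes>\<^bsub>BijGroup (inf_words d)\<^esub> h \<in> V_carrier d H"
    using V_iff[OF sg] m compose_Bij[OF gB hB] by simp
next
  have "LF d (\<lambda>x\<in>inf_words d. x) [] [] id"
    unfolding LF_def by (auto simp: ball_W)
  moreover have "id \<in> H" using subgroup.one_closed[OF sg] by (simp add: sym_group_one)
  moreover have "\<And>y. y \<in> inf_words d \<Longrightarrow> y \<in> word_ball d []" by (simp add: word_ball_def)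
  ultimately have "LPR d H (\<lambda>x\<in>inf_words d. x)" unfolding LPR_def by blast
  thus "\<one>\<^bsub>BijGroup (inf_words d)\<^esub> \<in> V_carrier d H"
    using V_iff[OF sg] id_Bij by (simp add: BijGroup_def)
next
  fix g assume g: "g \<in> V_carrier d H"
  hence gB: "g \<in> Bij (inf_words d)" and Lg: "LPR d H g" using V_iff[OF sg] by auto
  have b: "bij_betw g (inf_words d) (inf_words d)" using gB unfolding Bij_def by auto
  have "LPR d H (\<lambda>x \<in> inf_words d. (inv_into (inf_words d) g) x)"
    using LPR_inv[OF sg b Lg] LPR_cong[of d "(\<lambda>x \<in> inf_words d. (inv_into (inf_words d) g) x)"
      "inv_into (inf_words d) g" H] by simp
  thus "inv\<^bsub>BijGroup (inf_words d)\<^esub> g \<in> V_carrier d H"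
    using V_iff[OF sg] inv_BijGroup[OF gB] restrict_inv_into_Bij[OF gB] by simp
qed

lemma V_group_group: "subgroup H (sym_group d) \<Longrightarrow> group (V_group d H)"
  unfolding V_group_def using subgroup.subgroup_is_group[OF V_subgroup group_BijGroup] .

lemma stab_eq: "stab_group d H x = (BijGroup (inf_words d))\<lparr>carrier := {g \<in> V_carrier d H. g x = x}\<rparr>"
  unfolding stab_group_def V_group_def by simp

lemma stab_subgroup:
  assumes sg: "subgroup H (sym_group d)" and x: "x \<in> inf_words d"
  shows "subgroup {g \<in> V_carrier d H. g x = x} (BijGroup (inf_words d))"
proof -
  interpret V: subgroup "V_carrier d H" "BijGroup (inf_words d)" using V_subgroup[OF sg] .
  have VB: "\<And>g. g \<in> V_carrier d H \<Longrightarrow> g \<in> Bij (inf_words d)" using V_iff[OF sg] by auto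
  show ?thesis
  proof
    show "{g \<in> V_carrier d H. g x = x} \<subseteq> carrier (BijGroup (inf_words d))" using V.subset by auto
  next
    fix g h assume g: "g \<in> {g \<in> V_carrier d H. g x = x}" and h: "h \<in> {g \<in> V_carrier d H. g x = x}"
    have "g \<otimes>\<^bsub>BijGroup (inf_words d)\<^esub> h \<in> V_carrier d H" using g h V.m_closed by blast
    moreover have "g \<otimes>\<^bsub>BijGroup (inf_words d)\<^esub> h = compose (inf_words d) g h"
      using g h VB by (simp add: BijGroup_def)
    moreover have "compose (inf_words d) g h x = x" using g h x by (simp add: compose_def)
    ultimately show "g \<otimes>\<^bsub>BijGroup (inf_words d)\<^esub> h \<in> {g \<in> V_carrier d H. g x = x}"
      by simp
  next
    show "\<one>\<^bsub>BijGroup (inf_words d)\<^esub> \<in> {g \<in> V_carrier d H. g x = x}" using x V.one_closed by (simp add: BijGroup_def)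
  next
    fix g assume g: "g \<in> {g \<in> V_carrier d H. g x = x}"
    hence gB: "g \<in> Bij (inf_words d)" using VB by auto
    hence "inj_on g (inf_words d)" unfolding Bij_def bij_betw_def by auto
    hence "inv_into (inf_words d) g (g x) = x" using x by (rule inv_into_f_f)
    hence "inv_into (inf_words d) g x = x" using g by simp
    thus "inv\<^bsub>BijGroup (inf_words d)\<^esub> g \<in> {g \<in> V_carrier d H. g x = x}"
      using g inv_BijGroup[OF gB] x V.m_inv_closed[of g] by simp
  qed
qed

lemma stab_group_group: "subgroup H (sym_group d) \<Longrightarrow> x \<in> inf_words d \<Longrightarrow> group (stab_group d H x)"
  unfolding stab_eq using subgroup.subgroup_is_group[OF stab_subgroup group_BijGroup] by blast

lemma stab_mult: "g \<in> Bij (inf_words d) \<Longrightarrow> h \<in> Bij (inf_words d) \<Longrightarrow>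
   g \<otimes>\<^bsub>stab_group d H x\<^esub> h = compose (inf_words d) g h"
  unfolding stab_eq by (simp add: BijGroup_def)




locale gs =
  fixes d :: nat and H :: "(nat \<Rightarrow> nat) set" and x :: "nat \<Rightarrow> nat"
  assumes d2: "d \<ge> 2" and sg: "subgroup H (sym_group d)" and xW: "x \<in> inf_words d"
begin

abbreviation "P \<equiv> integer_group \<times>\<times> sym_group d"
abbreviation "S \<equiv> stab_group d H x"

definition GR :: "((nat \<Rightarrow> nat) \<Rightarrow> (nat \<Rightarrow> nat)) \<Rightarrow> int \<Rightarrow> (nat \<Rightarrow> nat) \<Rightarrow> bool" where
  "GR g s \<sigma> \<longleftrightarrow> (\<exists>w1 w2. LF d g w1 w2 \<sigma> \<and> \<sigma> \<in> H \<and> x \<in> word_ball d w1 \<and> s = int (length w1) - int (length w2))"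

definition psi :: "((nat \<Rightarrow> nat) \<Rightarrow> (nat \<Rightarrow> nat)) \<Rightarrow> int \<times> (nat \<Rightarrow> nat)" where
  "psi g = (THE p. GR g (fst p) (snd p))"

lemma GR_unique: "GR g s \<sigma> \<Longrightarrow> GR g s' \<sigma>' \<Longrightarrow> s = s' \<and> \<sigma> = \<sigma>'"
  unfolding GR_def using LF_unique[OF d2] by metis

lemma psi_eq: "GR g s \<sigma> \<Longrightarrow> psi g = (s, \<sigma>)"
  unfolding psi_def
  by (rule the_equality) (auto dest: GR_unique)

lemma S_carrier: "carrier S = {g \<in> V_carrier d H. g x = x}"
  unfolding stab_eq by simp

lemma group_S: "group S" using stab_group_group[OF sg xW] .

lemma group_P: "group P" using DirProd_group[OF group_integer_group sym_group_is_group] .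

lemma S_Bij: "g \<in> carrier S \<Longrightarrow> g \<in> Bij (inf_words d)"
  using S_carrier V_iff[OF sg] by auto

lemma GR_ex: "g \<in> carrier S \<Longrightarrow> \<exists>s \<sigma>. GR g s \<sigma>"
proof -
  assume "g \<in> carrier S"
  hence "LPR d H g" using S_carrier V_iff[OF sg] by auto
  then obtain w1 w2 \<sigma> where "\<sigma> \<in> H" "x \<in> word_ball d w1" "LF d g w1 w2 \<sigma>"
    using xW unfolding LPR_def by blast
  thus ?thesis unfolding GR_def by blast
qed

lemma psi_GR: "g \<in> carrier S \<Longrightarrow> GR g (fst (psi g)) (snd (psi g))"
  using GR_ex psi_eq by fastforce

lemma GR_H: "GR g s \<sigma> \<Longrightarrow> \<sigma> \<in> H" unfolding GR_def by auto

lemma psi_in: "g \<in> carrier S \<Longrightarrow> psi g \<in> carrier P"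
proof -
  assume "g \<in> carrier S"
  hence "snd (psi g) \<in> H" using psi_GR GR_H by blast
  hence "snd (psi g) \<in> carrier (sym_group d)" using subgroup.subset[OF sg] by auto
  thus ?thesis by (cases "psi g") (simp add: integer_group_def)
qed

lemma psi_hom: "psi \<in> hom S P"
proof (rule homI)
  fix g assume "g \<in> carrier S" thus "psi g \<in> carrier P" by (rule psi_in)
next
  fix g h assume g: "g \<in> carrier S" and h: "h \<in> carrier S"
  obtain s \<sigma> where Gg: "GR g s \<sigma>" using GR_ex[OF g] by blast
  obtain t \<tau> where Gh: "GR h t \<tau>" using GR_ex[OF h] by blast
  obtain w1 w2 where F: "LF d h w1 w2 \<tau>" and t: "\<tau> \<in> H" and xb: "x \<in> word_ball d w1"
     and te: "t = int (length w1) - int (length w2)" using Gh unfolding GR_def by blast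
  obtain v1 v2 where G: "LF d g v1 v2 \<sigma>" and s: "\<sigma> \<in> H" and xb': "x \<in> word_ball d v1"
     and se: "s = int (length v1) - int (length v2)" using Gg unfolding GR_def by blast
  have hx: "h x = x" using h S_carrier by auto
  obtain w b where F2: "LF d (g \<circ> h) w b (\<sigma> \<circ> \<tau>)" and xw: "x \<in> word_ball d w"
      and e: "int (length w) - int (length b) = t + s"
    using LF_comp[of d h w1 w2 \<tau> x g v1 v2 \<sigma>, OF F xb G] xb' hx te se by (auto)
  have m: "g \<otimes>\<^bsub>S\<^esub> h = compose (inf_words d) g h" using stab_mult S_Bij g h by blast
  have "LF d (g \<otimes>\<^bsub>S\<^esub> h) w b (\<sigma> \<circ> \<tau>)"
    using F2 LF_cong[of d "g \<otimes>\<^bsub>S\<^esub> h" "g \<circ> h"] m by (simp add: compose_def)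
  moreover have "\<sigma> \<circ> \<tau> \<in> H" using subgroup.m_closed[OF sg s t] by (simp add: sym_group_mult)
  ultimately have "GR (g \<otimes>\<^bsub>S\<^esub> h) (s + t) (\<sigma> \<circ> \<tau>)" unfolding GR_def using xw e by (metis add.commute)
  hence "psi (g \<otimes>\<^bsub>S\<^esub> h) = (s + t, \<sigma> \<circ> \<tau>)" by (rule psi_eq)
  moreover have "psi g = (s, \<sigma>)" "psi h = (t, \<tau>)" using psi_eq Gg Gh by auto
  ultimately show "psi (g \<otimes>\<^bsub>S\<^esub> h) = psi g \<otimes>\<^bsub>P\<^esub> psi h"
    by (simp add: integer_group_def sym_group_mult)
qed

lemma one_P: "\<one>\<^bsub>P\<^esub> = (0, id)" by (simp add: integer_group_def sym_group_one)

lemma kernel_eq: "kernel S P psi = germ_trivial d H x"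
proof
  show "kernel S P psi \<subseteq> germ_trivial d H x"
  proof
    fix g assume "g \<in> kernel S P psi"
    hence g: "g \<in> carrier S" and p: "psi g = (0, id)" unfolding kernel_def one_P by auto
    obtain s \<sigma> where Gg: "GR g s \<sigma>" using GR_ex[OF g] by blast
    hence "s = 0" "\<sigma> = id" using psi_eq p by auto
    then obtain w1 w2 where F: "LF d g w1 w2 id" and xb: "x \<in> word_ball d w1"
      and l: "length w1 = length w2" using Gg unfolding GR_def by auto
    have gx: "g x = x" using g S_carrier by auto
    have "x \<in> word_ball d w2" using LF_img[OF F xb] gx by simp
    hence "w2 = w1" using ball_pre[OF xb] ball_pre[of x d w2] l by metis
    hence gid: "\<forall>z\<in>word_ball d w1. g z = z" using F unfolding LF_def by (simp add: ball_decomp)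
    have "open_words d (word_ball d w1)" unfolding open_words_def
    proof (intro conjI ballI)
      show "word_ball d w1 \<subseteq> inf_words d" using ball_W by auto
      fix y assume y: "y \<in> word_ball d w1"
      show "\<exists>n. \<forall>z\<in>inf_words d. (\<forall>i<n. z i = y i) \<longrightarrow> z \<in> word_ball d w1"
        using y by (intro exI[of _ "length w1"]) (auto simp: word_ball_def)
    qed
    thus "g \<in> germ_trivial d H x" unfolding germ_trivial_def using g xb gid by blast
  qed
next
  show "germ_trivial d H x \<subseteq> kernel S P psi"
  proof
    fix g assume "g \<in> germ_trivial d H x"
    then obtain U where g: "g \<in> carrier S" and U: "open_words d U" "x \<in> U" and gid: "\<forall>y\<in>U. g y = y"
      unfolding germ_trivial_def by blast
    obtain n where n: "\<forall>z\<in>inf_words d. (\<forall>i<n. z i = x i) \<longrightarrow> z \<in> U"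
      using U unfolding open_words_def by blast
    define w where "w = pre n x"
    have sub: "word_ball d w \<subseteq> U" using n pre_eq_ball[OF xW] unfolding w_def by auto
    have "LF d g w w id" unfolding LF_def
      using sub gid pre_fin[OF xW] ball_decomp permutes_id unfolding w_def by fastforce
    moreover have "id \<in> H" using subgroup.one_closed[OF sg] by (simp add: sym_group_one)
    moreover have "x \<in> word_ball d w" using pre_ball[OF xW] w_def by simp
    ultimately have "GR g 0 id" unfolding GR_def by auto
    hence "psi g = (0, id)" by (rule psi_eq)
    thus "g \<in> kernel S P psi" unfolding kernel_def one_P using g by auto
  qed
qed

definition "I = psi ` carrier S"

lemma I_sub: "subgroup I P"
  unfolding I_def using group_hom.img_is_subgroup[of S P psi] group_S group_P psi_hom
  by (simp add: group_hom_def group_hom_axioms_def)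

lemma germ_iso_I: "germ_group d H x \<cong> P\<lparr>carrier := I\<rparr>"
proof -
  have gI: "group (P\<lparr>carrier := I\<rparr>)" using subgroup.subgroup_is_group[OF I_sub group_P] .
  have "psi \<in> hom S (P\<lparr>carrier := I\<rparr>)" using psi_hom unfolding hom_def I_def by auto
  hence gh: "group_hom S (P\<lparr>carrier := I\<rparr>) psi" using group_S gI
    by (simp add: group_hom_def group_hom_axioms_def)
  have "kernel S (P\<lparr>carrier := I\<rparr>) psi = kernel S P psi" unfolding kernel_def by simp
  hence k: "kernel S (P\<lparr>carrier := I\<rparr>) psi = germ_trivial d H x" using kernel_eq by simp
  have "psi ` carrier S = carrier (P\<lparr>carrier := I\<rparr>)" unfolding I_def by simp
  from group_hom.FactGroup_iso[OF gh this] k show ?thesis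
    unfolding germ_group_def by simp
qed

end



lemma sh_conc': "length w = n \<Longrightarrow> sh n (conc w y) = y" using sh_conc by blast

lemma inv_cancel: "\<sigma> permutes S \<Longrightarrow> inv' \<sigma> \<circ> (\<sigma> \<circ> f) = f" "\<sigma> permutes S \<Longrightarrow> \<sigma> \<circ> (inv' \<sigma> \<circ> f) = f"
  by (auto simp: fun_eq_iff permutes_inverses)

lemma V_intro:
  assumes sg: "subgroup H (sym_group d)"
    and ext: "g \<in> extensional (inf_words d)"
    and gW: "\<And>z. z \<in> inf_words d \<Longrightarrow> g z \<in> inf_words d"
    and g'W: "\<And>z. z \<in> inf_words d \<Longrightarrow> g' z \<in> inf_words d"
    and l: "\<And>z. z \<in> inf_words d \<Longrightarrow> g' (g z) = z"
    and r: "\<And>z. z \<in> inf_words d \<Longrightarrow> g (g' z) = z"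
    and L: "LPR d H g"
  shows "g \<in> V_carrier d H"
proof -
  have "bij_betw g (inf_words d) (inf_words d)"
    by (rule bij_betw_byWitness[where f'=g']) (use l r gW g'W in auto)
  thus ?thesis using V_iff[OF sg] ext L unfolding Bij_def by auto
qed

lemma out_ball:
  assumes y: "y \<in> inf_words d" and n: "y \<notin> word_ball d w"
  shows "\<exists>i<length w. y i \<noteq> w ! i \<and> (\<forall>z\<in>word_ball d (pre (Suc i) y). z \<notin> word_ball d w)"
proof -
  obtain i where i: "i < length w" "y i \<noteq> w ! i" using y n unfolding word_ball_def by auto
  have "\<forall>z\<in>word_ball d (pre (Suc i) y). z \<notin> word_ball d w"
  proof (intro ballI notI)
    fix z
    assume zb: "z \<in> word_ball d (pre (Suc i) y)" and zw: "z \<in> word_ball d w"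
    have "z i = y i" using pre_eq_ball[OF y] zb by auto
    moreover have "z i = w ! i" using zw i(1) unfolding word_ball_def by auto
    ultimately show False using i by simp
  qed
  thus ?thesis using i by blast
qed

lemma LF_id:
  assumes "w \<in> fin_words d" "\<And>z. z \<in> word_ball d w \<Longrightarrow> g z = z"
  shows "LF d g w w id"
  unfolding LF_def using assms ball_decomp permutes_id by auto

lemma perm_pow_id: "(\<sigma>::nat\<Rightarrow>nat) permutes {1..d} \<Longrightarrow> \<exists>q>0. \<sigma> ^^ q = id"
  using permutation_is_nilpotent[of \<sigma>] sym_group_carrier'[of \<sigma> d] sym_group_carrier by metis

lemma per_from:
  assumes x: "x \<in> inf_words d" and P: "P > 0" and e: "\<forall>j\<ge>N. x (j + P) = x j"
  shows "eventually_periodic d x"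
proof -
  have er: "x (j + r * P) = x j" if "j \<ge> N" for j r
  proof (induction r)
    case (Suc r)
    have "x (j + Suc r * P) = x ((j + r * P) + P)" by (simp add: algebra_simps)
    also have "\<dots> = x (j + r * P)" using e that by auto
    finally show ?case using Suc by simp
  qed simp
  define u where "u = pre N x"
  define v where "v = map (\<lambda>i. x (N + i)) [0..<P]"
  have uf: "u \<in> fin_words d" unfolding u_def using pre_fin[OF x] .
  have vf: "v \<in> fin_words d" using x unfolding v_def fin_words_def inf_words_def by auto
  have vn: "v \<noteq> []" using P unfolding v_def by simp
  have "x = conc u (per_word v)"
  proof
    fix i show "x i = conc u (per_word v) i"
    proof (cases "i < N")
      case True thus ?thesis unfolding conc_def u_def pre_def by simp
    next
      case False
      define j where "j = i - N"
      have "i = (N + j mod P) + (j div P) * P" using False unfolding j_def by simp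
      hence "x i = x (N + j mod P)" using er[of "N + j mod P" "j div P"] by simp
      moreover have "per_word v j = x (N + j mod P)" unfolding per_word_def v_def using P by simp
      ultimately show ?thesis using False unfolding conc_def u_def j_def by simp
    qed
  qed
  thus ?thesis unfolding eventually_periodic_def using uf vf vn by blast
qed

lemma shift_periodic:
  assumes x: "x \<in> inf_words d" and s: "\<sigma> permutes {1..d}" and ne: "n \<noteq> m"
    and e: "\<forall>k. x (m + k) = \<sigma> (x (n + k))"
  shows "eventually_periodic d x"
proof -
  obtain q where q: "q > 0" "\<sigma> ^^ q = id" using perm_pow_id[OF s] by blast
  show ?thesis
  proof (cases "m < n")
    case True
    define t where "t = n - m"
    have it: "x (m + k) = (\<sigma> ^^ r) (x (m + r * t + k))" for r k
    proof (induction r arbitrary: k)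
      case (Suc r)
      have "x (m + k) = (\<sigma> ^^ r) (x (m + r * t + k))" by (rule Suc)
      also have "x (m + r * t + k) = \<sigma> (x (n + (r * t + k)))" using e by (metis add.assoc)
      also have "n + (r * t + k) = m + Suc r * t + k" using True unfolding t_def by simp
      finally show ?case by (metis comp_apply funpow_Suc_right)
    qed simp
    show ?thesis
    proof (rule per_from[OF x, of "q * t" m])
      show "0 < q * t" using q True t_def by simp
      show "\<forall>j\<ge>m. x (j + q * t) = x j"
      proof (intro allI impI)
        fix j assume "m \<le> j"
        then obtain k where "j = m + k" using le_Suc_ex by blast
        thus "x (j + q * t) = x j" using it[of k q] q by (simp add: algebra_simps)
      qed
    qed
  next
    case False
    hence T: "n < m" using ne by simp
    define t where "t = m - n"
    have it: "x (n + r * t + k) = (\<sigma> ^^ r) (x (n + k))" for r k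
    proof (induction r arbitrary: k)
      case (Suc r)
      have nt: "n + t = m" using T unfolding t_def by simp
      have "n + Suc r * t + k = m + (r * t + k)" using nt by simp
      hence "x (n + Suc r * t + k) = x (m + (r * t + k))" by (rule arg_cong)
      also have "\<dots> = \<sigma> (x (n + (r * t + k)))" using e by blast
      also have "x (n + (r * t + k)) = (\<sigma> ^^ r) (x (n + k))" using Suc by (simp add: add.assoc)
      finally show ?case by simp
    qed simp
    show ?thesis
    proof (rule per_from[OF x, of "q * t" n])
      show "0 < q * t" using q T t_def by simp
      show "\<forall>j\<ge>n. x (j + q * t) = x j"
      proof (intro allI impI)
        fix j assume "n \<le> j"
        then obtain k where "j = n + k" using le_Suc_ex by blast
        thus "x (j + q * t) = x j" using it[of q k] q by (simp add: algebra_simps)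
      qed
    qed
  qed
qed

context gs begin

lemma GR_shift:
  assumes g: "g \<in> carrier S" and G: "GR g s \<sigma>"
  shows "\<exists>n m. s = int n - int m \<and> (\<forall>k. x (m + k) = \<sigma> (x (n + k)))"
proof -
  obtain w1 w2 where F: "LF d g w1 w2 \<sigma>" and xb: "x \<in> word_ball d w1"
    and se: "s = int (length w1) - int (length w2)" using G unfolding GR_def by blast
  have "x = g x" using g S_carrier by auto
  also have "\<dots> = conc w2 (\<sigma> \<circ> sh (length w1) x)" using F xb unfolding LF_def by auto
  finally have xe: "x = conc w2 (\<sigma> \<circ> sh (length w1) x)" .
  have "\<forall>k. x (length w2 + k) = \<sigma> (x (length w1 + k))"
  proof
    fix k
    have "x (length w2 + k) = conc w2 (\<sigma> \<circ> sh (length w1) x) (length w2 + k)" using xe by metis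
    thus "x (length w2 + k) = \<sigma> (x (length w1 + k))" by (simp add: conc_def sh_def add.commute)
  qed
  thus ?thesis using se by blast
qed

lemma I_elem: "p \<in> I \<Longrightarrow> \<exists>g. g \<in> carrier S \<and> GR g (fst p) (snd p)"
  unfolding I_def using psi_GR by auto

lemma I_H: "p \<in> I \<Longrightarrow> snd p \<in> H"
  using I_elem GR_H by blast

lemma I_zero: "(0, \<sigma>) \<in> I \<Longrightarrow> \<sigma> \<in> eventual_isotropy d H x"
proof -
  assume a: "(0, \<sigma>) \<in> I"
  then obtain g where g: "g \<in> carrier S" "GR g 0 \<sigma>" using I_elem by fastforce
  obtain n m where nm: "0 = int n - int m" "\<forall>k. x (m + k) = \<sigma> (x (n + k))" using GR_shift[OF g] by blast
  hence e: "\<forall>k. x (n + k) = \<sigma> (x (n + k))" by simp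
  have "\<forall>a. infinite {i. x i = a} \<longrightarrow> \<sigma> a = a"
  proof (intro allI impI)
    fix a assume "infinite {i. x i = a}"
    then obtain j where "j \<ge> n" "x j = a" unfolding infinite_nat_iff_unbounded_le by blast
    thus "\<sigma> a = a" using e[rule_format, of "j - n"] by simp
  qed
  thus ?thesis unfolding eventual_isotropy_def using I_H[OF a] by simp
qed

lemma I_nonper: "\<not> eventually_periodic d x \<Longrightarrow> p \<in> I \<Longrightarrow> fst p = 0"
proof -
  assume np: "\<not> eventually_periodic d x" and p: "p \<in> I"
  then obtain g where g: "g \<in> carrier S" "GR g (fst p) (snd p)" using I_elem by blast
  obtain n m where nm: "fst p = int n - int m" "\<forall>k. x (m + k) = snd p (x (n + k))" using GR_shift[OF g] by blast
  have "snd p permutes {1..d}" using I_H[OF p] H_perm[OF sg] by auto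
  hence "n = m" using shift_periodic[OF xW _ _ nm(2)] np by blast
  thus ?thesis using nm by simp
qed

lemma iso_one: "\<sigma> \<in> eventual_isotropy d H x \<Longrightarrow> (0, \<sigma>) \<in> I"
proof -
  assume sI: "\<sigma> \<in> eventual_isotropy d H x"
  hence sH: "\<sigma> \<in> H" and fx: "\<forall>a. infinite {i. x i = a} \<longrightarrow> \<sigma> a = a" unfolding eventual_isotropy_def by auto
  have sp: "\<sigma> permutes {1..d}" using H_perm[OF sg sH] .
  define F where "F = (\<Union>a\<in>{1..d}. if finite {j. x j = a} then {j. x j = a} else {})"
  have "finite F" unfolding F_def by auto
  then obtain N where N: "F \<subseteq> {..<N}" using finite_nat_bounded by blast
  have fixN: "\<sigma> (x j) = x j" if "j \<ge> N" for j
  proof -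
    have "x j \<in> {1..d}" using xW unfolding inf_words_def by auto
    moreover have "j \<notin> F" using N that by auto
    ultimately have "infinite {i. x i = x j}" unfolding F_def by auto
    thus ?thesis using fx by auto
  qed
  define w where "w = pre N x"
  have wf: "w \<in> fin_words d" unfolding w_def using pre_fin[OF xW] .
  have lw: "length w = N" unfolding w_def by simp
  define g where "g = (\<lambda>z\<in>inf_words d. if z \<in> word_ball d w then conc w (\<sigma> \<circ> sh N z) else z)"
  define g' where "g' = (\<lambda>z\<in>inf_words d. if z \<in> word_ball d w then conc w (inv' \<sigma> \<circ> sh N z) else z)"
  have si: "inv' \<sigma> permutes {1..d}" using permutes_inv[OF sp] .
  have gb: "z \<in> word_ball d w \<Longrightarrow> g z = conc w (\<sigma> \<circ> sh N z)" for z unfolding g_def using ball_W by auto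
  have gn: "z \<in> inf_words d \<Longrightarrow> z \<notin> word_ball d w \<Longrightarrow> g z = z" for z unfolding g_def by auto
  have g'b: "z \<in> word_ball d w \<Longrightarrow> g' z = conc w (inv' \<sigma> \<circ> sh N z)" for z unfolding g'_def using ball_W by auto
  have g'n: "z \<in> inf_words d \<Longrightarrow> z \<notin> word_ball d w \<Longrightarrow> g' z = z" for z unfolding g'_def by auto
  have inb: "z \<in> inf_words d \<Longrightarrow> \<tau> permutes {1..d} \<Longrightarrow> conc w (\<tau> \<circ> sh N z) \<in> word_ball d w" for z \<tau>
    using ball_conc[OF wf comp_W[OF _ sh_W]] by blast
  have FL: "LF d g w w \<sigma>" unfolding LF_def using wf sp gb lw by auto
  have gS: "g \<in> V_carrier d H"
  proof (rule V_intro[OF sg, where g'=g'])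
    show "g \<in> extensional (inf_words d)" unfolding g_def by simp
    fix z assume z: "z \<in> inf_words d"
    show "g z \<in> inf_words d" using z gb gn inb[OF z sp] ball_W by (cases "z \<in> word_ball d w") auto
    show "g' z \<in> inf_words d" using z g'b g'n inb[OF z si] ball_W by (cases "z \<in> word_ball d w") auto
    show "g' (g z) = z"
    proof (cases "z \<in> word_ball d w")
      case True
      have "g' (g z) = conc w (inv' \<sigma> \<circ> sh N (conc w (\<sigma> \<circ> sh N z)))" using gb[OF True] g'b inb[OF z sp] by simp
      also have "\<dots> = conc w (sh N z)" using lw by (simp add: sh_conc' inv_cancel[OF sp])
      finally show ?thesis using ball_decomp[OF True] lw by simp
    qed (use z gn g'n in auto)
    show "g (g' z) = z"
    proof (cases "z \<in> word_ball d w")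
      case True
      have "g (g' z) = conc w (\<sigma> \<circ> sh N (conc w (inv' \<sigma> \<circ> sh N z)))" using g'b[OF True] gb inb[OF z si] by simp
      also have "\<dots> = conc w (sh N z)" using lw by (simp add: sh_conc' inv_cancel[OF sp])
      finally show ?thesis using ball_decomp[OF True] lw by simp
    qed (use z gn g'n in auto)
  next
    show "LPR d H g" unfolding LPR_def
    proof
      fix y assume y: "y \<in> inf_words d"
      show "\<exists>w1 w2 \<sigma>. \<sigma> \<in> H \<and> y \<in> word_ball d w1 \<and> LF d g w1 w2 \<sigma>"
      proof (cases "y \<in> word_ball d w")
        case True thus ?thesis using FL sH by blast
      next
        case False
        then obtain i where "\<forall>z\<in>word_ball d (pre (Suc i) y). z \<notin> word_ball d w" using out_ball[OF y] by blast
        hence "LF d g (pre (Suc i) y) (pre (Suc i) y) id" using gn ball_W pre_fin[OF y] by (intro LF_id) auto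
        moreover have "id \<in> H" using subgroup.one_closed[OF sg] by (simp add: sym_group_one)
        ultimately show ?thesis using pre_ball[OF y] by blast
      qed
    qed
  qed
  have xb: "x \<in> word_ball d w" using pre_ball[OF xW] w_def by simp
  have gx: "g x = x"
  proof -
    have "g x = conc w (\<sigma> \<circ> sh N x)" using gb[OF xb] .
    also have "\<dots> = x"
    proof
      fix i show "conc w (\<sigma> \<circ> sh N x) i = x i"
        using fixN[of i] lw unfolding conc_def sh_def w_def pre_def by auto
    qed
    finally show ?thesis .
  qed
  have "g \<in> carrier S" using gS gx S_carrier by auto
  moreover have "GR g 0 \<sigma>" unfolding GR_def using FL sH xb by auto
  ultimately show "(0, \<sigma>) \<in> I" unfolding I_def using psi_eq by force
qed

lemma I_nonper_eq: "\<not> eventually_periodic d x \<Longrightarrow> I = {0} \<times> eventual_isotropy d H x"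
proof
  assume np: "\<not> eventually_periodic d x"
  show "I \<subseteq> {0} \<times> eventual_isotropy d H x"
  proof
    fix p assume p: "p \<in> I"
    hence "fst p = 0" using I_nonper[OF np] by blast
    hence "(0, snd p) \<in> I" using p by (metis prod.collapse)
    thus "p \<in> {0} \<times> eventual_isotropy d H x" using I_zero \<open>fst p = 0\<close> by (metis SigmaI prod.collapse singletonI)
  qed
  show "{0} \<times> eventual_isotropy d H x \<subseteq> I" using iso_one by auto
qed

end



lemma LF_shift:
  assumes "a \<in> fin_words d" "b \<in> fin_words d" "r \<in> fin_words d"
    and "\<And>z. z \<in> word_ball d (b@r) \<Longrightarrow> g z = conc a (sh (length b) z)"
  shows "LF d g (b@r) (a@r) id"
  unfolding LF_def
proof (intro conjI ballI)
  fix z assume z: "z \<in> word_ball d (b@r)"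
  hence "sh (length b) z \<in> word_ball d r" by (simp add: ball_append)
  hence "sh (length b) z = conc r (sh (length r) (sh (length b) z))" using ball_decomp by metis
  hence "g z = conc a (conc r (sh (length (b@r)) z))" using assms(4)[OF z] by (simp add: add.commute)
  thus "g z = conc (a @ r) (id \<circ> sh (length (b @ r)) z)" by (simp add: conc_append)
qed (use assms permutes_id in auto)

lemma per_conc:
  assumes v: "v \<noteq> []" shows "per_word v = conc v (per_word v)"
proof
  fix i
  show "per_word v i = conc v (per_word v) i"
  proof (cases "i < length v")
    case True thus ?thesis unfolding per_word_def conc_def by simp
  next
    case False thus ?thesis unfolding per_word_def conc_def by (simp add: le_mod_geq)
  qed
qed

lemma fin_Cons[simp]: "a # w \<in> fin_words d \<longleftrightarrow> a \<in> {1..d} \<and> w \<in> fin_words d"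
  unfolding fin_words_def by auto

lemma per_W:
  assumes "v \<in> fin_words d" "v \<noteq> []" shows "per_word v \<in> inf_words d"
proof -
  have "\<And>i. v ! (i mod length v) \<in> set v" using assms(2) by simp
  thus ?thesis using assms(1) unfolding per_word_def fin_words_def inf_words_def by blast
qed

lemma ball_mono_pre: "z \<in> inf_words d \<Longrightarrow> m \<le> n \<Longrightarrow> word_ball d (pre n z) \<subseteq> word_ball d (pre m z)"
  using pre_eq_ball by auto

context gs begin

lemma I_nonper_iso: "\<not> eventually_periodic d x \<Longrightarrow> P\<lparr>carrier := I\<rparr> \<cong> eventual_isotropy_group d H x"
proof -
  assume np: "\<not> eventually_periodic d x"
  have Ie: "I = {0} \<times> eventual_isotropy d H x" using I_nonper_eq[OF np] .
  have "snd \<in> iso (P\<lparr>carrier := I\<rparr>) (eventual_isotropy_group d H x)"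
    unfolding iso_def
  proof (intro CollectI conjI)
    show "snd \<in> hom (P\<lparr>carrier := I\<rparr>) (eventual_isotropy_group d H x)"
      by (rule homI) (auto simp: Ie eventual_isotropy_group_def sym_group_mult)
    show "bij_betw snd (carrier (P\<lparr>carrier := I\<rparr>)) (carrier (eventual_isotropy_group d H x))"
      unfolding bij_betw_def inj_on_def by (auto simp: Ie eventual_isotropy_group_def image_iff)
  qed
  thus ?thesis by (rule is_isoI)
qed

lemma per_shift: "eventually_periodic d x \<Longrightarrow> \<exists>n>0. (int n, id) \<in> I"
proof -
  assume "eventually_periodic d x"
  then obtain u v where uf: "u \<in> fin_words d" and vf: "v \<in> fin_words d" and vn: "v \<noteq> []"
    and xe: "x = conc u (per_word v)" unfolding eventually_periodic_def by blast
  define e where "e = (if v ! 0 = 1 then 2 else (1::nat))"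
  have ef: "[e] \<in> fin_words d" using d2 unfolding e_def fin_words_def by auto
  have ev: "e \<noteq> v ! 0" unfolding e_def by auto
  define A where "A = u @ v @ v"
  define Bw where "Bw = u @ v"
  define Cw where "Cw = u @ [e]"
  define Dw where "Dw = u @ [e] @ v"
  have fins: "A \<in> fin_words d" "Bw \<in> fin_words d" "Cw \<in> fin_words d" "Dw \<in> fin_words d"
    unfolding A_def Bw_def Cw_def Dw_def using uf vf ef by auto
  have AB: "A = Bw @ v" unfolding A_def Bw_def by simp
  have DC: "Dw = Cw @ v" unfolding Dw_def Cw_def by simp
  have disj: "z \<in> word_ball d Bw \<Longrightarrow> z \<notin> word_ball d Cw" for z
  proof
    assume "z \<in> word_ball d Bw" "z \<in> word_ball d Cw"
    hence "z (length u) = v ! 0" "z (length u) = e" unfolding word_ball_def Bw_def Cw_def using vn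
      by (auto simp: nth_append)
    thus False using ev by simp
  qed
  have AsB: "z \<in> word_ball d A \<Longrightarrow> z \<in> word_ball d Bw" for z unfolding AB by (simp add: ball_append)
  have DsC: "z \<in> word_ball d Dw \<Longrightarrow> z \<in> word_ball d Cw" for z unfolding DC by (simp add: ball_append)
  define g where "g = (\<lambda>z\<in>inf_words d. if z \<in> word_ball d A then conc Bw (sh (length A) z)
     else if z \<in> word_ball d Bw then conc Cw (sh (length Bw) z)
     else if z \<in> word_ball d Cw then conc Dw (sh (length Cw) z) else z)"
  define g' where "g' = (\<lambda>z\<in>inf_words d. if z \<in> word_ball d Bw then conc A (sh (length Bw) z)
     else if z \<in> word_ball d Dw then conc Cw (sh (length Dw) z)
     else if z \<in> word_ball d Cw then conc Bw (sh (length Cw) z) else z)"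
  have cb: "\<And>w t. w \<in> fin_words d \<Longrightarrow> t \<in> inf_words d \<Longrightarrow> conc w t \<in> word_ball d w" using ball_conc by blast
  have shW: "\<And>n z. z \<in> inf_words d \<Longrightarrow> sh n z \<in> inf_words d" using sh_W by blast
  have g1: "z \<in> word_ball d A \<Longrightarrow> g z = conc Bw (sh (length A) z)" for z
    unfolding g_def using ball_W by auto
  have g2: "z \<in> word_ball d Bw \<Longrightarrow> z \<notin> word_ball d A \<Longrightarrow> g z = conc Cw (sh (length Bw) z)" for z
    unfolding g_def using ball_W by auto
  have g3: "z \<in> word_ball d Cw \<Longrightarrow> g z = conc Dw (sh (length Cw) z)" for z
    unfolding g_def using ball_W disj AsB by auto
  have g4: "z \<in> inf_words d \<Longrightarrow> z \<notin> word_ball d Bw \<Longrightarrow> z \<notin> word_ball d Cw \<Longrightarrow> g z = z" for z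
    unfolding g_def using AsB by auto
  have h1: "z \<in> word_ball d Bw \<Longrightarrow> g' z = conc A (sh (length Bw) z)" for z
    unfolding g'_def using ball_W by auto
  have h2: "z \<in> word_ball d Dw \<Longrightarrow> g' z = conc Cw (sh (length Dw) z)" for z
    unfolding g'_def using ball_W[of z] disj[of z] DsC[of z] by auto
  have h3: "z \<in> word_ball d Cw \<Longrightarrow> z \<notin> word_ball d Dw \<Longrightarrow> g' z = conc Bw (sh (length Cw) z)" for z
    unfolding g'_def using ball_W disj by auto
  have h4: "z \<in> inf_words d \<Longrightarrow> z \<notin> word_ball d Bw \<Longrightarrow> z \<notin> word_ball d Cw \<Longrightarrow> g' z = z" for z
    unfolding g'_def using DsC by auto
  have notA: "t \<in> inf_words d \<Longrightarrow> t \<notin> word_ball d v \<Longrightarrow> conc Bw t \<notin> word_ball d A" for t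
    unfolding AB using conc_ball_iff fins by blast
  have notD: "t \<in> inf_words d \<Longrightarrow> t \<notin> word_ball d v \<Longrightarrow> conc Cw t \<notin> word_ball d Dw" for t
    unfolding DC using conc_ball_iff fins by blast
  have shA: "z \<in> word_ball d Bw \<Longrightarrow> z \<notin> word_ball d A \<Longrightarrow> sh (length Bw) z \<notin> word_ball d v" for z
    unfolding AB by (simp add: ball_append)
  have shD: "z \<in> word_ball d Cw \<Longrightarrow> z \<notin> word_ball d Dw \<Longrightarrow> sh (length Cw) z \<notin> word_ball d v" for z
    unfolding DC by (simp add: ball_append)
  have gW: "g z \<in> inf_words d" if z: "z \<in> inf_words d" for z
    using g1 g2 g3 g4 z cb fins shW ball_W by (metis)
  have g'W: "g' z \<in> inf_words d" if z: "z \<in> inf_words d" for z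
    using h1 h2 h3 h4 z cb fins shW ball_W by (metis)
  have gS: "g \<in> V_carrier d H"
  proof (rule V_intro[OF sg, where g'=g'])
    show "g \<in> extensional (inf_words d)" unfolding g_def by simp
    fix z assume z: "z \<in> inf_words d"
    show "g z \<in> inf_words d" using gW[OF z] .
    show "g' z \<in> inf_words d" using g'W[OF z] .
    show "g' (g z) = z"
    proof (cases "z \<in> word_ball d A")
      case True
      have "g' (g z) = conc A (sh (length Bw) (conc Bw (sh (length A) z)))"
        using g1[OF True] h1 cb[OF fins(2) shW[OF z]] by simp
      thus ?thesis using ball_decomp[OF True] by simp
    next
      case nA: False
      show ?thesis
      proof (cases "z \<in> word_ball d Bw")
        case True
        define t where "t = sh (length Bw) z"
        have t: "t \<in> inf_words d" "t \<notin> word_ball d v" using shW[OF z] shA[OF True nA] t_def by auto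
        have gz: "g z = conc Cw t" using g2[OF True nA] t_def by simp
        have "g' (conc Cw t) = conc Bw (sh (length Cw) (conc Cw t))"
          using h3 cb[OF fins(3) t(1)] notD[OF t] by blast
        thus ?thesis using gz ball_decomp[OF True] t_def by simp
      next
        case nB: False
        show ?thesis
        proof (cases "z \<in> word_ball d Cw")
          case True
          define t where "t = sh (length Cw) z"
          have gz: "g z = conc Dw t" using g3[OF True] t_def by simp
          have "g' (conc Dw t) = conc Cw (sh (length Dw) (conc Dw t))"
            using h2 cb[OF fins(4) shW[OF z]] t_def by blast
          thus ?thesis using gz ball_decomp[OF True] t_def by simp
        next
          case False thus ?thesis using g4 h4 z nB by simp
        qed
      qed
    qed
    show "g (g' z) = z"
    proof (cases "z \<in> word_ball d Bw")
      case True
      have "g (g' z) = conc Bw (sh (length A) (conc A (sh (length Bw) z)))"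
        using h1[OF True] g1 cb[OF fins(1) shW[OF z]] by simp
      thus ?thesis using ball_decomp[OF True] by simp
    next
      case nB: False
      show ?thesis
      proof (cases "z \<in> word_ball d Dw")
        case True
        define t where "t = sh (length Dw) z"
        have gz: "g' z = conc Cw t" using h2[OF True] t_def by simp
        have "g (conc Cw t) = conc Dw (sh (length Cw) (conc Cw t))"
          using g3 cb[OF fins(3) shW[OF z]] t_def by blast
        thus ?thesis using gz ball_decomp[OF True] t_def by simp
      next
        case nD: False
        show ?thesis
        proof (cases "z \<in> word_ball d Cw")
          case True
          define t where "t = sh (length Cw) z"
          have t: "t \<in> inf_words d" "t \<notin> word_ball d v" using shW[OF z] shD[OF True nD] t_def by auto
          have gz: "g' z = conc Bw t" using h3[OF True nD] t_def by simp
          have "g (conc Bw t) = conc Cw (sh (length Bw) (conc Bw t))"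
            using g2 cb[OF fins(2) t(1)] notA[OF t] by blast
          thus ?thesis using gz ball_decomp[OF True] t_def by simp
        next
          case False thus ?thesis using g4 h4 z nB by simp
        qed
      qed
    qed
  next
    have idH: "id \<in> H" using subgroup.one_closed[OF sg] by (simp add: sym_group_one)
    have LA: "LF d g A Bw id" using LF_shift[of Bw d A "[]" g] g1 fins by simp
    show "LPR d H g" unfolding LPR_def
    proof
      fix z assume z: "z \<in> inf_words d"
      show "\<exists>w1 w2 \<sigma>. \<sigma> \<in> H \<and> z \<in> word_ball d w1 \<and> LF d g w1 w2 \<sigma>"
      proof (cases "z \<in> word_ball d A")
        case True thus ?thesis using LA idH by blast
      next
        case nA: False
        show ?thesis
        proof (cases "z \<in> word_ball d Bw")
          case True
          define t where "t = sh (length Bw) z"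
          have t: "t \<in> inf_words d" "t \<notin> word_ball d v" using shW[OF z] shA[OF True nA] t_def by auto
          obtain i where i: "\<forall>t'\<in>word_ball d (pre (Suc i) t). t' \<notin> word_ball d v"
            using out_ball[OF t] by blast
          define r where "r = pre (Suc i) t"
          have rf: "r \<in> fin_words d" using pre_fin[OF t(1)] r_def by simp
          have "LF d g (Bw @ r) (Cw @ r) id"
          proof (rule LF_shift[OF fins(3) fins(2) rf])
            fix z' assume z': "z' \<in> word_ball d (Bw @ r)"
            hence zB: "z' \<in> word_ball d Bw" and zr: "sh (length Bw) z' \<in> word_ball d r"
              by (auto simp: ball_append)
            have "z' \<notin> word_ball d A" using zr i r_def unfolding AB by (auto simp: ball_append)
            thus "g z' = conc Cw (sh (length Bw) z')" using g2 zB by blast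
          qed
          moreover have "z \<in> word_ball d (Bw @ r)" using True pre_ball[OF t(1)] t_def r_def
            by (simp add: ball_append)
          ultimately show ?thesis using idH by blast
        next
          case nB: False
          show ?thesis
          proof (cases "z \<in> word_ball d Cw")
            case True
            have "LF d g Cw Dw id" using LF_shift[of Dw d Cw "[]" g] g3 fins by simp
            thus ?thesis using True idH by blast
          next
            case nC: False
            obtain i where i: "\<forall>z'\<in>word_ball d (pre (Suc i) z). z' \<notin> word_ball d Bw"
              using out_ball[OF z nB] by blast
            obtain j where j: "\<forall>z'\<in>word_ball d (pre (Suc j) z). z' \<notin> word_ball d Cw"
              using out_ball[OF z nC] by blast
            define n where "n = Suc (max i j)"
            have s1: "word_ball d (pre n z) \<subseteq> word_ball d (pre (Suc i) z)"
              using ball_mono_pre[OF z] n_def by simp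
            have s2: "word_ball d (pre n z) \<subseteq> word_ball d (pre (Suc j) z)"
              using ball_mono_pre[OF z] n_def by simp
            have "LF d g (pre n z) (pre n z) id"
              using pre_fin[OF z] s1 s2 i j g4 ball_W by (intro LF_id) blast+
            thus ?thesis using pre_ball[OF z] idH by blast
          qed
        qed
      qed
    qed
  qed
  have xA: "x = conc A (per_word v)" using xe per_conc[OF vn] unfolding A_def by (metis conc_append)
  have xb: "x \<in> word_ball d A" using xA ball_conc[OF fins(1) per_W[OF vf vn]] by simp
  have gx: "g x = x"
  proof -
    have "g x = conc Bw (per_word v)" using g1[OF xb] xA by simp
    also have "\<dots> = x" using xe per_conc[OF vn] unfolding Bw_def by (metis conc_append)
    finally show ?thesis .
  qed
  have LA: "LF d g A Bw id" using LF_shift[of Bw d A "[]" g] g1 fins by simp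
  have idH: "id \<in> H" using subgroup.one_closed[OF sg] by (simp add: sym_group_one)
  have "GR g (int (length A) - int (length Bw)) id" unfolding GR_def using LA idH xb by blast
  moreover have "int (length A) - int (length Bw) = int (length v)" unfolding A_def Bw_def by simp
  moreover have "g \<in> carrier S" using gS gx S_carrier by simp
  ultimately have "(int (length v), id) \<in> I" unfolding I_def using psi_eq by force
  thus ?thesis using vn by blast
qed

end



context gs begin

abbreviation "Hx \<equiv> eventual_isotropy d H x"

lemma Hx_sym: "a \<in> Hx \<Longrightarrow> a \<in> carrier (sym_group d)"
  using subgroup.subset[OF sg] unfolding eventual_isotropy_def by auto

lemma zP: "a \<in> Hx \<Longrightarrow> (0, a) \<in> carrier P" using Hx_sym by (simp add: carrier_DirProd)

lemma fst_mult: "fst (a \<otimes>\<^bsub>P\<^esub> b) = fst a + fst b" by (simp add: mult_DirProd')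
lemma snd_mult: "snd (a \<otimes>\<^bsub>P\<^esub> b) = snd a \<circ> snd b" by (simp add: mult_DirProd' sym_group_mult)

lemma fst_inv: "a \<in> carrier P \<Longrightarrow> fst (inv\<^bsub>P\<^esub> a) = - fst a"
  using inv_DirProd[OF group_integer_group sym_group_is_group, of "fst a" "snd a"] by (cases a) auto

declare carrier_DirProd[simp del] one_DirProd[simp del]

lemma grp_cancel:
  assumes "group G" "a \<in> carrier G" "w \<in> carrier G"
  shows "inv\<^bsub>G\<^esub> a \<otimes>\<^bsub>G\<^esub> (a \<otimes>\<^bsub>G\<^esub> w) = w \<and> a \<otimes>\<^bsub>G\<^esub> (inv\<^bsub>G\<^esub> a \<otimes>\<^bsub>G\<^esub> w) = w"
proof -
  interpret group G by fact
  show ?thesis using assms by (simp add: m_assoc[symmetric])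
qed

lemma fst_hom: "fst \<in> hom P integer_group"
  by (rule homI) (auto simp: fst_mult)

lemma I_P: "q \<in> I \<Longrightarrow> q \<in> carrier P" using subgroup.subset[OF I_sub] by auto

lemma Hx_zero: "(0, a) \<in> I \<longleftrightarrow> a \<in> Hx" using I_zero iso_one by blast

end

locale gsp = gs +
  assumes per: "eventually_periodic d x"
begin

definition "p0 = (LEAST m. m > 0 \<and> (\<exists>\<sigma>. (int m, \<sigma>) \<in> I))"

lemma p0_prop: "p0 > 0 \<and> (\<exists>\<sigma>. (int p0, \<sigma>) \<in> I)"
proof -
  have "\<exists>m. 0 < m \<and> (\<exists>\<sigma>. (int m, \<sigma>) \<in> I)" using per_shift[OF per] by blast
  thus ?thesis unfolding p0_def by (rule LeastI_ex)
qed

lemma p0_min: "0 < m \<Longrightarrow> m < p0 \<Longrightarrow> (int m, \<sigma>) \<notin> I"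
  unfolding p0_def using not_less_Least by blast

definition "t0 = (int p0, SOME \<sigma>. (int p0, \<sigma>) \<in> I)"

lemma t0I: "t0 \<in> I" unfolding t0_def using p0_prop someI_ex by metis

definition T :: "int \<Rightarrow> int \<times> (nat \<Rightarrow> nat)" where "T k = t0 [^]\<^bsub>P\<^esub> k"

lemma TI: "T k \<in> I" unfolding T_def using group.subgroup_int_pow_closed[OF group_P I_sub t0I] .
lemma TP: "T k \<in> carrier P" using I_P[OF TI] .

lemma fstT: "fst (T k) = k * int p0"
proof -
  have "fst (T k) = fst t0 [^]\<^bsub>integer_group\<^esub> k"
    unfolding T_def using hom_int_pow[OF fst_hom I_P[OF t0I] group_P group_integer_group] .
  thus ?thesis by (simp add: t0_def)
qed

lemma T_add: "T (k + l) = T k \<otimes>\<^bsub>P\<^esub> T l"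
  unfolding T_def using group.int_pow_mult[OF group_P I_P[OF t0I]] .

lemma T_neg: "T (- k) = inv\<^bsub>P\<^esub> (T k)"
  unfolding T_def using group.int_pow_neg[OF group_P I_P[OF t0I]] .

lemma T0: "T 0 = \<one>\<^bsub>P\<^esub>" unfolding T_def by simp

lemma fst_zero_I: "q \<in> I \<Longrightarrow> fst q = 0 \<Longrightarrow> q = (0, snd q) \<and> snd q \<in> Hx"
  using Hx_zero by (metis prod.collapse)

lemma div_p: "q \<in> I \<Longrightarrow> fst q = (fst q div int p0) * int p0"
proof -
  assume q: "q \<in> I"
  define k where "k = fst q div int p0"
  define e where "e = q \<otimes>\<^bsub>P\<^esub> inv\<^bsub>P\<^esub> (T k)"
  have eI: "e \<in> I" unfolding e_def using q TI subgroup.m_closed[OF I_sub] subgroup.m_inv_closed[OF I_sub] by blast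
  have "fst e = fst q - k * int p0" unfolding e_def by (simp add: fst_mult fst_inv TP fstT)
  hence fe: "fst e = fst q mod int p0" unfolding k_def by (simp add: minus_div_mult_eq_mod)
  have pp: "int p0 > 0" using p0_prop by simp
  have "fst e = 0"
  proof (rule ccontr)
    assume "fst e \<noteq> 0"
    hence pos: "0 < nat (fst e)" and lt: "nat (fst e) < p0" using fe pp pos_mod_sign[OF pp, of "fst q"]
      pos_mod_bound[OF pp, of "fst q"] by auto
    have "(int (nat (fst e)), snd e) \<in> I" using eI fe pp pos_mod_sign[OF pp, of "fst q"]
      by (metis int_nat_eq prod.collapse)
    thus False using p0_min[OF pos lt] by blast
  qed
  thus ?thesis using fe unfolding k_def by (metis add.right_neutral div_mult_mod_eq)
qed

definition phi :: "int \<Rightarrow> (nat \<Rightarrow> nat) \<Rightarrow> (nat \<Rightarrow> nat)" where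
  "phi k = (\<lambda>b\<in>Hx. snd (T k \<otimes>\<^bsub>P\<^esub> (0, b) \<otimes>\<^bsub>P\<^esub> inv\<^bsub>P\<^esub> (T k)))"

definition cj :: "int \<Rightarrow> int \<times> (nat \<Rightarrow> nat) \<Rightarrow> int \<times> (nat \<Rightarrow> nat)" where
  "cj k y = T k \<otimes>\<^bsub>P\<^esub> y \<otimes>\<^bsub>P\<^esub> inv\<^bsub>P\<^esub> (T k)"

lemma cj_I: "y \<in> I \<Longrightarrow> cj k y \<in> I"
  unfolding cj_def using TI subgroup.m_closed[OF I_sub] subgroup.m_inv_closed[OF I_sub] by blast

lemma cj_fst: "y \<in> carrier P \<Longrightarrow> fst (cj k y) = fst y"
  unfolding cj_def by (simp add: fst_mult fst_inv TP)

lemma cj_zero: "b \<in> Hx \<Longrightarrow> cj k (0, b) = (0, phi k b) \<and> phi k b \<in> Hx"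
proof -
  assume b: "b \<in> Hx"
  have "(0, b) \<in> I" using Hx_zero b by simp
  hence "cj k (0,b) \<in> I" "fst (cj k (0, b)) = 0" using cj_I cj_fst zP[OF b] by auto
  hence "cj k (0,b) = (0, snd (cj k (0,b))) \<and> snd (cj k (0,b)) \<in> Hx" using fst_zero_I by blast
  thus ?thesis using b unfolding phi_def cj_def by simp
qed

lemma cj_mult: "y \<in> carrier P \<Longrightarrow> z \<in> carrier P \<Longrightarrow> cj k (y \<otimes>\<^bsub>P\<^esub> z) = cj k y \<otimes>\<^bsub>P\<^esub> cj k z"
proof -
  assume y: "y \<in> carrier P" and z: "z \<in> carrier P"
  interpret G: group P by (rule group_P)
  show ?thesis unfolding cj_def using TP y z
    by (simp add: G.m_assoc grp_cancel[OF group_P])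
qed

lemma cj_cj: "y \<in> carrier P \<Longrightarrow> cj k (cj l y) = cj (k + l) y"
proof -
  assume y: "y \<in> carrier P"
  interpret G: group P by (rule group_P)
  have "inv\<^bsub>P\<^esub> (T (k + l)) = inv\<^bsub>P\<^esub> (T l) \<otimes>\<^bsub>P\<^esub> inv\<^bsub>P\<^esub> (T k)"
    using T_add TP by (simp add: G.inv_mult_group)
  thus ?thesis unfolding cj_def using TP y T_add by (simp add: G.m_assoc)
qed

lemma cj0: "y \<in> carrier P \<Longrightarrow> cj 0 y = y"
proof -
  assume y: "y \<in> carrier P"
  interpret G: group P by (rule group_P)
  show ?thesis unfolding cj_def T0 using y by simp
qed

lemma Hx_mult: "a \<in> Hx \<Longrightarrow> b \<in> Hx \<Longrightarrow> a \<circ> b \<in> Hx"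
proof -
  assume a: "a \<in> Hx" and b: "b \<in> Hx"
  have "(0, a) \<otimes>\<^bsub>P\<^esub> (0, b) \<in> I" using a b Hx_zero subgroup.m_closed[OF I_sub] by blast
  hence "(0, a \<circ> b) \<in> I" by (simp add: sym_group_mult)
  thus ?thesis using Hx_zero by blast
qed

lemma decomp: "q \<in> I \<Longrightarrow> \<exists>a. a \<in> Hx \<and> q = (0, a) \<otimes>\<^bsub>P\<^esub> T (fst q div int p0)"
proof -
  assume q: "q \<in> I"
  interpret G: group P by (rule group_P)
  define k where "k = fst q div int p0"
  define e where "e = q \<otimes>\<^bsub>P\<^esub> inv\<^bsub>P\<^esub> (T k)"
  have eI: "e \<in> I" unfolding e_def using q TI subgroup.m_closed[OF I_sub] subgroup.m_inv_closed[OF I_sub] by blast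
  have "fst e = 0" unfolding e_def using div_p[OF q] TP by (simp add: fst_mult fst_inv fstT k_def)
  hence ee: "e = (0, snd e)" "snd e \<in> Hx" using fst_zero_I[OF eI] by auto
  have "e \<otimes>\<^bsub>P\<^esub> T k = q" unfolding e_def using q I_P TP by (simp add: G.m_assoc grp_cancel[OF group_P])
  thus ?thesis using ee k_def by metis
qed

definition Phi :: "int \<times> (nat \<Rightarrow> nat) \<Rightarrow> (nat \<Rightarrow> nat) \<times> int" where
  "Phi q = (snd (q \<otimes>\<^bsub>P\<^esub> inv\<^bsub>P\<^esub> (T (fst q div int p0))), fst q div int p0)"

lemma Phi_std: "a \<in> Hx \<Longrightarrow> Phi ((0, a) \<otimes>\<^bsub>P\<^esub> T k) = (a, k)"
proof -
  assume a: "a \<in> Hx"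
  interpret G: group P by (rule group_P)
  have pp: "int p0 > 0" using p0_prop by simp
  have f: "fst ((0, a) \<otimes>\<^bsub>P\<^esub> T k) div int p0 = k" using pp by (simp add: fst_mult fstT)
  have "(0, a) \<otimes>\<^bsub>P\<^esub> T k \<otimes>\<^bsub>P\<^esub> inv\<^bsub>P\<^esub> T k = (0, a)" using zP[OF a] TP by (simp add: G.m_assoc grp_cancel[OF group_P])
  thus ?thesis unfolding Phi_def f by simp
qed

lemma std_I: "a \<in> Hx \<Longrightarrow> (0, a) \<otimes>\<^bsub>P\<^esub> T k \<in> I"
  using Hx_zero TI subgroup.m_closed[OF I_sub] by blast

lemma semi_iso: "P\<lparr>carrier := I\<rparr> \<cong> semidirect_product (eventual_isotropy_group d H x) integer_group phi"
proof -
  interpret G: group P by (rule group_P)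
  let ?N = "eventual_isotropy_group d H x"
  have Nc: "carrier ?N = Hx" unfolding eventual_isotropy_group_def by simp
  have Nm: "\<And>a b. a \<otimes>\<^bsub>?N\<^esub> b = a \<circ> b" unfolding eventual_isotropy_group_def by (simp add: sym_group_mult)
  have Sc: "carrier (semidirect_product ?N integer_group phi) = Hx \<times> UNIV"
    unfolding semidirect_product_def Nc by simp
  have Sm: "\<And>a k b l. (a, k) \<otimes>\<^bsub>semidirect_product ?N integer_group phi\<^esub> (b, l) = (a \<circ> phi k b, k + l)"
    unfolding semidirect_product_def by (simp add: Nm)
  have "Phi \<in> iso (P\<lparr>carrier := I\<rparr>) (semidirect_product ?N integer_group phi)"
    unfolding iso_def
  proof (intro CollectI conjI)
    show "Phi \<in> hom (P\<lparr>carrier := I\<rparr>) (semidirect_product ?N integer_group phi)"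
    proof (rule homI)
      fix q assume "q \<in> carrier (P\<lparr>carrier := I\<rparr>)"
      hence q: "q \<in> I" by simp
      then obtain a where a: "a \<in> Hx" "q = (0, a) \<otimes>\<^bsub>P\<^esub> T (fst q div int p0)" using decomp by blast
      have "Phi q = (a, fst q div int p0)" using Phi_std[OF a(1)] a(2) by metis
      thus "Phi q \<in> carrier (semidirect_product ?N integer_group phi)"
        using Sc a(1) by simp
    next
      fix q1 q2 assume "q1 \<in> carrier (P\<lparr>carrier := I\<rparr>)" "q2 \<in> carrier (P\<lparr>carrier := I\<rparr>)"
      hence q1: "q1 \<in> I" and q2: "q2 \<in> I" by auto
      obtain a1 where a1: "a1 \<in> Hx" "q1 = (0, a1) \<otimes>\<^bsub>P\<^esub> T (fst q1 div int p0)" using decomp[OF q1] by blast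
      obtain a2 where a2: "a2 \<in> Hx" "q2 = (0, a2) \<otimes>\<^bsub>P\<^esub> T (fst q2 div int p0)" using decomp[OF q2] by blast
      define k1 where "k1 = fst q1 div int p0"
      define k2 where "k2 = fst q2 div int p0"
      have q1e: "q1 = (0, a1) \<otimes>\<^bsub>P\<^esub> T k1" using a1 k1_def by simp
      have q2e: "q2 = (0, a2) \<otimes>\<^bsub>P\<^esub> T k2" using a2 k2_def by simp
      have c: "cj k1 (0, a2) = (0, phi k1 a2)" "phi k1 a2 \<in> Hx" using cj_zero[OF a2(1)] by auto
      have "q1 \<otimes>\<^bsub>P\<^esub> q2 = ((0, a1) \<otimes>\<^bsub>P\<^esub> T k1) \<otimes>\<^bsub>P\<^esub> ((0, a2) \<otimes>\<^bsub>P\<^esub> T k2)"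
        by (simp only: q1e q2e)
      also have "\<dots> = (0, a1) \<otimes>\<^bsub>P\<^esub> (T k1 \<otimes>\<^bsub>P\<^esub> (0, a2) \<otimes>\<^bsub>P\<^esub> inv\<^bsub>P\<^esub> (T k1)) \<otimes>\<^bsub>P\<^esub> (T k1 \<otimes>\<^bsub>P\<^esub> T k2)"
        using zP[OF a1(1)] zP[OF a2(1)] TP by (simp add: G.m_assoc grp_cancel[OF group_P])
      also have "\<dots> = (0, a1) \<otimes>\<^bsub>P\<^esub> (0, phi k1 a2) \<otimes>\<^bsub>P\<^esub> T (k1 + k2)"
        using c(1) T_add unfolding cj_def by simp
      also have "\<dots> = (0, a1 \<circ> phi k1 a2) \<otimes>\<^bsub>P\<^esub> T (k1 + k2)" by (simp add: sym_group_mult)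
      finally have "Phi (q1 \<otimes>\<^bsub>P\<^esub> q2) = (a1 \<circ> phi k1 a2, k1 + k2)"
        using Phi_std Hx_mult[OF a1(1) c(2)] by simp
      moreover have "Phi q1 = (a1, k1)" "Phi q2 = (a2, k2)" using Phi_std a1(1) a2(1) q1e q2e by auto
      ultimately show "Phi (q1 \<otimes>\<^bsub>P\<lparr>carrier := I\<rparr>\<^esub> q2) = Phi q1 \<otimes>\<^bsub>semidirect_product ?N integer_group phi\<^esub> Phi q2"
        using Sm by simp
    qed
    show "bij_betw Phi (carrier (P\<lparr>carrier := I\<rparr>)) (carrier (semidirect_product ?N integer_group phi))"
      unfolding Sc
    proof (rule bij_betw_byWitness[where f'="\<lambda>(a, k). (0, a) \<otimes>\<^bsub>P\<^esub> T k"])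
      show "\<forall>q\<in>carrier (P\<lparr>carrier := I\<rparr>). (\<lambda>(a, k). (0, a) \<otimes>\<^bsub>P\<^esub> T k) (Phi q) = q"
      proof
        fix q assume "q \<in> carrier (P\<lparr>carrier := I\<rparr>)"
        hence "q \<in> I" by simp
        then obtain a where a: "a \<in> Hx" "q = (0, a) \<otimes>\<^bsub>P\<^esub> T (fst q div int p0)" using decomp[of q] by blast
        have "Phi q = (a, fst q div int p0)" using Phi_std[OF a(1)] a(2) by metis
        thus "(\<lambda>(a, k). (0, a) \<otimes>\<^bsub>P\<^esub> T k) (Phi q) = q" by (simp add: a(2)[symmetric])
      qed
      show "\<forall>y\<in>Hx \<times> UNIV. Phi ((\<lambda>(a, k). (0, a) \<otimes>\<^bsub>P\<^esub> T k) y) = y" using Phi_std by auto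
      show "Phi ` carrier (P\<lparr>carrier := I\<rparr>) \<subseteq> Hx \<times> UNIV"
      proof
        fix y assume "y \<in> Phi ` carrier (P\<lparr>carrier := I\<rparr>)"
        then obtain q where q: "q \<in> I" "y = Phi q" by auto
        then obtain a where a: "a \<in> Hx" "q = (0, a) \<otimes>\<^bsub>P\<^esub> T (fst q div int p0)" using decomp by blast
        have "Phi q = (a, fst q div int p0)" using Phi_std[OF a(1)] a(2) by metis
        thus "y \<in> Hx \<times> UNIV" using q a(1) by simp
      qed
      show "(\<lambda>(a, k). (0, a) \<otimes>\<^bsub>P\<^esub> T k) ` (Hx \<times> UNIV) \<subseteq> carrier (P\<lparr>carrier := I\<rparr>)"
        using std_I by auto
    qed
  qed
  thus ?thesis by (rule is_isoI)
qed

lemma phi_hom: "phi \<in> hom integer_group (AutoGroup (eventual_isotropy_group d H x))"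
proof -
  let ?N = "eventual_isotropy_group d H x"
  interpret G: group P by (rule group_P)
  have Nc: "carrier ?N = Hx" unfolding eventual_isotropy_group_def by simp
  have Nm: "\<And>a b. a \<otimes>\<^bsub>?N\<^esub> b = a \<circ> b" unfolding eventual_isotropy_group_def by (simp add: sym_group_mult)
  have pc: "phi k b = snd (cj k (0, b))" if "b \<in> Hx" for k b using that unfolding phi_def cj_def by simp
  have pin: "phi k b \<in> Hx" if "b \<in> Hx" for k b using cj_zero[OF that] by simp
  have pp: "phi k (phi l b) = phi (k + l) b" if b: "b \<in> Hx" for k l b
  proof -
    have "cj k (cj l (0, b)) = cj (k + l) (0, b)" using cj_cj zP[OF b] by blast
    thus ?thesis using cj_zero[OF b] cj_zero[OF pin[OF b]] by simp
  qed
  have pmul: "phi k (a \<circ> b) = phi k a \<circ> phi k b" if a: "a \<in> Hx" and b: "b \<in> Hx" for k a b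
  proof -
    have "cj k ((0, a) \<otimes>\<^bsub>P\<^esub> (0, b)) = cj k (0, a) \<otimes>\<^bsub>P\<^esub> cj k (0, b)" by (rule cj_mult[OF zP[OF a] zP[OF b]])
    moreover have "(0, a) \<otimes>\<^bsub>P\<^esub> (0, b) = (0, a \<circ> b)" by (simp add: sym_group_mult)
    ultimately have "cj k (0, a \<circ> b) = cj k (0, a) \<otimes>\<^bsub>P\<^esub> cj k (0, b)" by simp
    thus ?thesis using cj_zero a b Hx_mult[OF a b] by (simp add: sym_group_mult)
  qed
  have p0': "phi 0 b = b" if "b \<in> Hx" for b
  proof -
    have "((0::int), phi 0 b) = (0, b)" using cj0[OF zP[OF that]] cj_zero[OF that, of 0] by metis
    thus ?thesis by simp
  qed
  have pB: "phi k \<in> Bij Hx" for k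
    unfolding Bij_def
  proof
    show "phi k \<in> extensional Hx" unfolding phi_def by simp
    have "bij_betw (phi k) Hx Hx"
      by (rule bij_betw_byWitness[where f'="phi (-k)"]) (use pp p0' pin in auto)
    thus "phi k \<in> {f. bij_betw f Hx Hx}" by simp
  qed
  have pA: "phi k \<in> auto ?N" for k
    unfolding auto_def Nc
  proof
    show "phi k \<in> hom ?N ?N" by (rule homI) (auto simp: Nc Nm pin pmul)
    show "phi k \<in> Bij Hx" using pB .
  qed
  show ?thesis
  proof (rule homI)
    fix k :: int show "phi k \<in> carrier (AutoGroup ?N)" using pA unfolding AutoGroup_def by simp
  next
    fix k l :: int
    have "phi k \<otimes>\<^bsub>AutoGroup ?N\<^esub> phi l = compose Hx (phi k) (phi l)"
      using pB unfolding AutoGroup_def BijGroup_def Nc by simp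
    also have "\<dots> = phi (k + l)"
    proof
      fix b show "compose Hx (phi k) (phi l) b = phi (k + l) b"
      proof (cases "b \<in> Hx")
        case True thus ?thesis using pp[OF True] by (simp add: compose_def)
      next
        case False thus ?thesis by (simp add: compose_def phi_def)
      qed
    qed
    finally show "phi (k \<otimes>\<^bsub>integer_group\<^esub> l) = phi k \<otimes>\<^bsub>AutoGroup ?N\<^esub> phi l" by simp
  qed
qed

end



theorem corollary7p16:
  fixes d :: nat and H :: "(nat \<Rightarrow> nat) set" and x :: "nat \<Rightarrow> nat"
  assumes "d \<ge> 2"
    and "subgroup H (sym_group d)"
    and "x \<in> inf_words d"
  shows "(\<not> eventually_periodic d x \<longrightarrow>
            germ_group d H x \<cong> eventual_isotropy_group d H x)
       \<and> (eventually_periodic d x \<longrightarrow>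
            (\<exists>\<phi>. \<phi> \<in> hom integer_group (AutoGroup (eventual_isotropy_group d H x)) \<and>
                 germ_group d H x \<cong>
                   semidirect_product (eventual_isotropy_group d H x) integer_group \<phi>))"
proof -
  interpret gs d H x using assms by (rule gs.intro)
  show ?thesis
  proof (intro conjI impI)
    assume np: "\<not> eventually_periodic d x"
    show "germ_group d H x \<cong> eventual_isotropy_group d H x"
      using iso_trans[OF germ_iso_I I_nonper_iso[OF np]] .
  next
    assume pe: "eventually_periodic d x"
    interpret gsp d H x using gs_axioms pe by (simp add: gsp_def gsp_axioms_def)
    show "\<exists>\<phi>. \<phi> \<in> hom integer_group (AutoGroup (eventual_isotropy_group d H x)) \<and>
                 germ_group d H x \<cong>
                   semidirect_product (eventual_isotropy_group d H x) integer_group \<phi>"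
      using phi_hom iso_trans[OF germ_iso_I semi_iso] by blast
  qed
qed

end
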